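(* Let $c,d$ be positive integers, $\alpha,\delta\in(0,1]$, and $C_0\subseteq\mathbb{F}_2^d$ a linear code with minimum distance $d_0$, with $\delta d_0>1$. Let $\epsilon\in(0,\delta-\frac1{d_0})$ be a constant. Then for all sufficiently large $n$ and every $(c,d,\alpha,\delta)$-bipartite expander $G$ with $n$ left vertices (and any fixed orderings of the neighborhoods of right vertices), the minimum distance of the Tanner code $T(G,C_0)$ is greater than $f_\delta^{-1}\left(\frac1{d_0}+\epsilon\right)\alpha n$.
   Context: Binary linear codes; the minimum distance of a code is the least Hamming distance between two distinct codewords. A bipartite graph $G=(L\cup R,E)$ is $(c,d)$-regular if left degrees are $c$ and right degrees $d$; $N(S)$ is the neighborhood of $S$. A $(c,d,\alpha,\delta)$-bipartite expander is a $(c,d)$-regular bipartite graph with $|N(S)|\ge\delta c|S|$ for every $S\subseteq L$ with $|S|\le\alpha|L|$. Tanner code: $L=[n]$, for each $v\in R$ a fixed ordering of $N(v)$ defines $x_{N(v)}\in\mathbb{F}_2^d$ for $x\in\mathbb{F}_2^n$, and $T(G,C_0)=\{x: x_{N(v)}\in C_0\ \forall v\in R\}$. Size-Expansion Function: for $k>1$, $f_\delta(k)$ is the optimal value of the linear program in variables $\beta_i$, $i\in\mathbb{N}^+$: minimize $\frac1k\sum_{i\ge1}\beta_i$ subject to $\sum_{i\ge1}i\beta_i=k$, $\sum_{i\ge1}\left(1-(1-\frac1k)^i\right)\beta_i\ge\delta$, $\beta_i\ge0$. For $y\in(0,\delta)$, $f_\delta^{-1}(y)$ denotes the value $k>1$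 with $f_\delta(k)=y$. The parameters $c,d,\alpha,\delta,C_0,\epsilon$ are constants independent of $n$. *)

theory Defs
  imports "HOL-Analysis.Analysis" "HOL-Library.Extended_Real"
begin

(* Binary vectors of length k: functions nat => bool (True = 1 in F_2) vanishing outside {0..<k}. *)
definition bvecs :: "nat \<Rightarrow> (nat \<Rightarrow> bool) set" where
  "bvecs k = {x. \<forall>i. k \<le> i \<longrightarrow> \<not> x i}"

definition hamming_dist :: "(nat \<Rightarrow> bool) \<Rightarrow> (nat \<Rightarrow> bool) \<Rightarrow> nat" where
  "hamming_dist x y = card {i. x i \<noteq> y i}"

(* Binary linear code of length k: an F_2-subspace of F_2^k (addition in F_2 = xor). *)
definition binary_linear_code :: "nat \<Rightarrow> (nat \<Rightarrow> bool) set \<Rightarrow> bool" where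
  "binary_linear_code k C \<longleftrightarrow> C \<subseteq> bvecs k \<and> (\<lambda>_. False) \<in> C \<and>
     (\<forall>x\<in>C. \<forall>y\<in>C. (\<lambda>i. x i \<noteq> y i) \<in> C)"

(* Minimum distance (infinity if fewer than two codewords). *)
definition min_dist :: "(nat \<Rightarrow> bool) set \<Rightarrow> enat" where
  "min_dist C = (INF p \<in> {(x, y). x \<in> C \<and> y \<in> C \<and> x \<noteq> y}. enat (hamming_dist (fst p) (snd p)))"

(* A bipartite graph with left vertices {0..<n}, right vertices {0..<m}, where
   nbr v i (i < d) is the i-th neighbour of right vertex v in its fixed ordering. *)
definition nbhd :: "nat \<Rightarrow> nat \<Rightarrow> (nat \<Rightarrow> nat \<Rightarrow> nat) \<Rightarrow> nat set \<Rightarrow> nat set" where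
  "nbhd m d nbr S = {v. v < m \<and> (\<exists>i<d. nbr v i \<in> S)}"

definition cd_regular :: "nat \<Rightarrow> nat \<Rightarrow> nat \<Rightarrow> nat \<Rightarrow> (nat \<Rightarrow> nat \<Rightarrow> nat) \<Rightarrow> bool" where
  "cd_regular c d n m nbr \<longleftrightarrow>
     (\<forall>v<m. inj_on (nbr v) {0..<d} \<and> nbr v ` {0..<d} \<subseteq> {0..<n}) \<and>
     (\<forall>u<n. card {v. v < m \<and> u \<in> nbr v ` {0..<d}} = c)"

definition bipartite_expander ::
  "nat \<Rightarrow> nat \<Rightarrow> real \<Rightarrow> real \<Rightarrow> nat \<Rightarrow> nat \<Rightarrow> (nat \<Rightarrow> nat \<Rightarrow> nat) \<Rightarrow> bool" where
  "bipartite_expander c d \<alpha> \<delta> n m nbr \<longleftrightarrow> cd_regular c d n m nbr \<and>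
     (\<forall>S. S \<subseteq> {0..<n} \<and> real (card S) \<le> \<alpha> * real n \<longrightarrow>
        real (card (nbhd m d nbr S)) \<ge> \<delta> * real c * real (card S))"

definition tanner_code ::
  "nat \<Rightarrow> nat \<Rightarrow> nat \<Rightarrow> (nat \<Rightarrow> nat \<Rightarrow> nat) \<Rightarrow> (nat \<Rightarrow> bool) set \<Rightarrow> (nat \<Rightarrow> bool) set" where
  "tanner_code n m d nbr C0 =
     {x \<in> bvecs n. \<forall>v<m. (\<lambda>i. if i < d then x (nbr v i) else False) \<in> C0}"

(* Size-expansion function: optimal value (infimum) of the LP in variables beta_i, i >= 1
   (beta 0 is forced to 0). *)
definition size_exp :: "real \<Rightarrow> real \<Rightarrow> real" where
  "size_exp \<delta> k = Inf {(1 / k) * (\<Sum>i. \<beta> i) | \<beta>. \<beta> 0 = 0 \<and> (\<forall>i. \<beta> i \<ge> 0) \<and>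
      summable \<beta> \<and> (\<lambda>i. real i * \<beta> i) sums k \<and>
      summable (\<lambda>i. (1 - (1 - 1 / k) ^ i) * \<beta> i) \<and>
      (\<Sum>i. (1 - (1 - 1 / k) ^ i) * \<beta> i) \<ge> \<delta>}"

definition size_exp_inv :: "real \<Rightarrow> real \<Rightarrow> real" where
  "size_exp_inv \<delta> y = (THE k. k > 1 \<and> size_exp \<delta> k = y)"

end

theory Submission
  imports Defs
begin


definition feas :: "real \<Rightarrow> real \<Rightarrow> (nat \<Rightarrow> real) \<Rightarrow> bool" where
  "feas \<delta> k \<beta> \<longleftrightarrow> \<beta> 0 = 0 \<and> (\<forall>i. \<beta> i \<ge> 0) \<and>
      summable \<beta> \<and> (\<lambda>i. real i * \<beta> i) sums k \<and>
      summable (\<lambda>i. (1 - (1 - 1 / k) ^ i) * \<beta> i) \<and>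
      (\<Sum>i. (1 - (1 - 1 / k) ^ i) * \<beta> i) \<ge> \<delta>"

lemma size_exp_eq: "size_exp \<delta> k = Inf ((\<lambda>\<beta>. (1/k) * suminf \<beta>) ` {\<beta>. feas \<delta> k \<beta>})"
  unfolding size_exp_def feas_def by (simp add: setcompr_eq_image)

lemma e1_feas:
  assumes "1 \<le> k" "\<delta> \<le> 1"
  shows "feas \<delta> k (\<lambda>i. if i = 1 then k else 0)"
proof -
  have s1: "(\<lambda>i. if i = 1 then k else 0) sums k"
    using sums_finite[of "{1}" "\<lambda>i. if i = 1 then k else 0"] by auto
  have s2: "(\<lambda>i. real i * (if i = 1 then k else 0)) sums k"
    using sums_finite[of "{1}" "\<lambda>i. real i * (if i = 1 then k else 0)"] by auto
  have s3: "(\<lambda>i. (1 - (1 - 1 / k) ^ i) * (if i = 1 then k else 0)) sums 1"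
    using sums_finite[of "{1}" "\<lambda>i. (1 - (1 - 1 / k) ^ i) * (if i = 1 then k else 0)"] assms
    by auto
  show ?thesis unfolding feas_def using s1 s2 s3 assms
    by (auto simp: sums_iff)
qed

lemma feas_nonempty: "1 \<le> k \<Longrightarrow> \<delta> \<le> 1 \<Longrightarrow> {\<beta>. feas \<delta> k \<beta>} \<noteq> {}"
  using e1_feas by blast

lemma obj_nonneg: "feas \<delta> k \<beta> \<Longrightarrow> k > 0 \<Longrightarrow> (1/k) * suminf \<beta> \<ge> 0"
  unfolding feas_def by (auto intro!: suminf_nonneg divide_nonneg_pos)

lemma size_exp_le:
  assumes "feas \<delta> k \<beta>" "k > 0"
  shows "size_exp \<delta> k \<le> (1/k) * suminf \<beta>"
  unfolding size_exp_eq
proof (rule cInf_lower)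
  show "bdd_below ((\<lambda>\<beta>. 1 / k * suminf \<beta>) ` {\<beta>. feas \<delta> k \<beta>})"
    using obj_nonneg[OF _ assms(2)] by (auto intro!: bdd_belowI[where m=0])
qed (use assms in auto)

lemma size_exp_ge:
  assumes "1 \<le> k" "\<delta> \<le> 1" "\<And>\<beta>. feas \<delta> k \<beta> \<Longrightarrow> a \<le> (1/k) * suminf \<beta>"
  shows "a \<le> size_exp \<delta> k"
  unfolding size_exp_eq
  by (rule cInf_greatest) (use assms feas_nonempty in auto)

lemma S_eq: "(k::real) > 0 \<Longrightarrow> (1 - (1 - 1/k) ^ i) * k = (\<Sum>j<i. (1 - 1/k) ^ j)"
  using one_diff_power_eq[of "1 - 1/k" i] by simp

lemma q_bounds: "1 \<le> k \<Longrightarrow> 0 \<le> 1 - 1/(k::real) \<and> 1 - 1/k < 1"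
  by (auto simp: field_simps)

lemma S_mono:
  assumes "1 \<le> (k::real)" "k \<le> k'"
  shows "(1 - (1 - 1/k) ^ i) * k \<le> (1 - (1 - 1/k') ^ i) * k'"
proof -
  have q: "0 \<le> 1 - 1/k" "1 - 1/k \<le> 1 - 1/k'"
    using assms by (auto simp: field_simps)
  show ?thesis using assms
    by (simp add: S_eq sum_mono power_mono q)
qed

lemma S_strict:
  assumes "1 \<le> (k::real)" "k \<le> k'" "2 \<le> i"
  shows "(1 - (1 - 1/k) ^ i) * k + ((1 - 1/k') - (1 - 1/k)) \<le> (1 - (1 - 1/k') ^ i) * k'"
proof -
  have q: "0 \<le> 1 - 1/k" "1 - 1/k \<le> 1 - 1/k'"
    using assms by (auto simp: field_simps)
  have split: "{..<i} = insert 1 ({..<i} - {1})" using assms by auto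
  have "(\<Sum>j<i. (1 - 1/k) ^ j) + ((1 - 1/k') - (1 - 1/k)) \<le> (\<Sum>j<i. (1 - 1/k') ^ j)"
    apply (subst (1 2) split)
    apply (simp add: sum.insert_remove)
    using sum_mono[of "{..<i} - {1}" "\<lambda>j. (1 - 1/k) ^ j" "\<lambda>j. (1 - 1/k') ^ j"] power_mono[OF q(2) q(1)]
    by auto
  then show ?thesis using assms by (simp add: S_eq)
qed

lemma pow_le1: "1 \<le> k \<Longrightarrow> 0 \<le> 1 - (1 - 1/(k::real)) ^ i \<and> 1 - (1 - 1/k) ^ i \<le> 1"
  using q_bounds[of k] by (auto simp: power_le_one)

lemma summable_weighted:
  fixes \<beta> w :: "nat \<Rightarrow> real"
  assumes "summable \<beta>" "\<And>i. \<beta> i \<ge> 0" "\<And>i. 0 \<le> w i" "\<And>i. w i \<le> B"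
  shows "summable (\<lambda>i. w i * \<beta> i)"
proof (rule summable_comparison_test[where g="\<lambda>i. B * \<beta> i"])
  show "\<exists>N. \<forall>n\<ge>N. norm (w n * \<beta> n) \<le> B * \<beta> n"
    using assms by (auto intro!: mult_right_mono)
  show "summable (\<lambda>i. B * \<beta> i)" using assms(1) by (rule summable_mult)
qed


lemma single_sums: "(\<lambda>i. g i * (if i = N then b else 0)) sums (g N * (b::real))"
  using sums_finite[of "{N}" "\<lambda>i. g i * (if i = N then b else 0)"] by auto

lemma single_sums': "(\<lambda>i. (if i = N then b else 0)) sums (b::real)"
  using sums_finite[of "{N}" "\<lambda>i. (if i = N then b else 0)"] by auto

lemma obj_ge:
  assumes "feas \<delta> k \<beta>" "1 \<le> k"
  shows "\<delta> / k \<le> (1/k) * suminf \<beta>"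
proof -
  from assms have f: "\<beta> 0 = 0" "\<forall>i. \<beta> i \<ge> 0" "summable \<beta>"
    "summable (\<lambda>i. (1 - (1 - 1 / k) ^ i) * \<beta> i)"
    "(\<Sum>i. (1 - (1 - 1 / k) ^ i) * \<beta> i) \<ge> \<delta>" unfolding feas_def by auto
  have "(\<Sum>i. (1 - (1 - 1 / k) ^ i) * \<beta> i) \<le> suminf \<beta>"
    apply (rule suminf_le[OF _ f(4) f(3)])
    using pow_le1[OF assms(2)] f(2) by (simp add: mult_left_le_one_le)
  with f(5) have "\<delta> \<le> suminf \<beta>" by simp
  then show ?thesis using assms(2) by (simp add: divide_right_mono)
qed

lemma scale_feas:
  assumes "1 \<le> k" "k \<le> k'" "feas \<delta> k \<beta>"
  shows "feas \<delta> k' (\<lambda>i. (k'/k) * \<beta> i) \<and> (1/k') * suminf (\<lambda>i. (k'/k) * \<beta> i) = (1/k) * suminf \<beta>"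
proof -
  from assms have f: "\<beta> 0 = 0" "\<forall>i. \<beta> i \<ge> 0" "summable \<beta>" "(\<lambda>i. real i * \<beta> i) sums k"
    "summable (\<lambda>i. (1 - (1 - 1 / k) ^ i) * \<beta> i)"
    "(\<Sum>i. (1 - (1 - 1 / k) ^ i) * \<beta> i) \<ge> \<delta>" unfolding feas_def by auto
  have k': "1 \<le> k'" using assms by simp
  have s1: "summable (\<lambda>i. (k'/k) * \<beta> i)" using f(3) by (rule summable_mult)
  have s2: "(\<lambda>i. real i * ((k'/k) * \<beta> i)) sums k'"
    using sums_mult[OF f(4), of "k'/k"] assms by (simp add: mult.left_commute)
  have s3: "summable (\<lambda>i. (1 - (1 - 1 / k') ^ i) * ((k'/k) * \<beta> i))"
    by (rule summable_weighted[OF s1, where B=1]) (use f(2) assms pow_le1[OF k'] in auto)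
  have le: "(1 - (1 - 1 / k) ^ i) * \<beta> i \<le> (1 - (1 - 1 / k') ^ i) * ((k'/k) * \<beta> i)" for i
  proof -
    have "(1 - (1 - 1 / k) ^ i) * k \<le> (1 - (1 - 1 / k') ^ i) * k'" by (rule S_mono[OF assms(1,2)])
    then have "(1 - (1 - 1 / k) ^ i) \<le> (1 - (1 - 1 / k') ^ i) * (k' / k)"
      using assms(1) by (simp add: field_simps)
    then show ?thesis using f(2) by (metis mult.assoc mult_right_mono)
  qed
  have "(\<Sum>i. (1 - (1 - 1 / k) ^ i) * \<beta> i) \<le> (\<Sum>i. (1 - (1 - 1 / k') ^ i) * ((k'/k) * \<beta> i))"
    by (rule suminf_le[OF le f(5) s3])
  with f(6) have c: "\<delta> \<le> (\<Sum>i. (1 - (1 - 1 / k') ^ i) * ((k'/k) * \<beta> i))" by simp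
  have o: "(1/k') * suminf (\<lambda>i. (k'/k) * \<beta> i) = (1/k) * suminf \<beta>"
    using suminf_mult[OF f(3), of "k'/k"] assms by simp
  have nn: "\<forall>i. 0 \<le> (k'/k) * \<beta> i" using f(2) assms by auto
  show ?thesis unfolding feas_def using f(1) nn s1 s2 s3 c o by simp
qed

lemma size_exp_mono:
  assumes "1 \<le> k" "k \<le> k'" "\<delta> \<le> 1"
  shows "size_exp \<delta> k' \<le> size_exp \<delta> k"
proof (rule size_exp_ge[OF assms(1,3)])
  fix \<beta> assume "feas \<delta> k \<beta>"
  from scale_feas[OF assms(1,2) this] have "feas \<delta> k' (\<lambda>i. (k'/k) * \<beta> i)"
    and e: "(1/k') * suminf (\<lambda>i. (k'/k) * \<beta> i) = (1/k) * suminf \<beta>" by auto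
  from size_exp_le[OF this(1)] assms e show "size_exp \<delta> k' \<le> 1 / k * suminf \<beta>" by simp
qed


lemma mix_sums:
  fixes g h :: "nat \<Rightarrow> real"
  assumes "(\<lambda>i. g i * h i) sums s"
  shows "(\<lambda>i. g i * (a * h i + (if i = N then b else 0))) sums (a * s + g N * b)"
proof -
  have "(\<lambda>i. a * (g i * h i) + g i * (if i = N then b else 0)) sums (a * s + g N * b)"
    by (rule sums_add[OF sums_mult[OF assms] single_sums])
  then show ?thesis by (simp add: algebra_simps)
qed

lemma mix_sums1:
  fixes h :: "nat \<Rightarrow> real"
  assumes "h sums s"
  shows "(\<lambda>i. (a * h i + (if i = N then b else 0))) sums (a * s + b)"
  using mix_sums[of "\<lambda>_. 1" h s a N b] assms by simp

lemma lip_step: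
  assumes "1 < k" "k < k'" "0 < \<delta>" "\<delta> < 1"
  shows "size_exp \<delta> k \<le> size_exp \<delta> k' + \<delta> * (k' - k) / (k' - \<delta> * k)"
proof -
  define \<theta> where "\<theta> = \<delta> * (k' - k) / (k' - \<delta> * k)"
  have den: "k' - \<delta> * k > 0" using assms
    by (smt (verit, best) mult_less_cancel_right2)
  have th0: "0 \<le> \<theta>" using assms den by (simp add: \<theta>_def)
  have th1: "\<theta> \<le> 1"
  proof -
    have "\<delta> * (k' - k) \<le> k' - \<delta> * k" using assms
      by (simp add: algebra_simps)
    then show ?thesis using den unfolding \<theta>_def by simp
  qed
  have omt: "1 - \<theta> = k' * (1 - \<delta>) / (k' - \<delta> * k)"
    using den unfolding \<theta>_def by (simp add: field_simps)
  have key: "(1 - \<theta>) * (k / k') * \<delta> + \<theta> = \<delta>"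
  proof -
    have "(1 - \<theta>) * (k / k') * \<delta> = k * \<delta> * (1 - \<delta>) / (k' - \<delta> * k)"
      unfolding omt using assms by simp
    then have "(1 - \<theta>) * (k / k') * \<delta> + \<theta> = (k * \<delta> * (1 - \<delta>) + \<delta> * (k' - k)) / (k' - \<delta> * k)"
      unfolding \<theta>_def by (simp add: add_divide_distrib)
    also have "k * \<delta> * (1 - \<delta>) + \<delta> * (k' - k) = \<delta> * (k' - \<delta> * k)" by (simp add: algebra_simps)
    finally show ?thesis using den by simp
  qed
  have "size_exp \<delta> k - \<theta> \<le> size_exp \<delta> k'"
  proof (rule size_exp_ge)
    show "1 \<le> k'" "\<delta> \<le> 1" using assms by auto
    fix \<beta> assume fe: "feas \<delta> k' \<beta>"
    from fe have f: "\<beta> 0 = 0" "\<forall>i. \<beta> i \<ge> 0" "summable \<beta>" "(\<lambda>i. real i * \<beta> i) sums k'"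
      "summable (\<lambda>i. (1 - (1 - 1 / k') ^ i) * \<beta> i)"
      "(\<Sum>i. (1 - (1 - 1 / k') ^ i) * \<beta> i) \<ge> \<delta>" unfolding feas_def by auto
    define a where "a = (1 - \<theta>) * (k / k')"
    have a0: "0 \<le> a" using th1 assms by (simp add: a_def)
    define \<gamma> where "\<gamma> = (\<lambda>i. a * \<beta> i + (if i = 1 then \<theta> * k else 0))"
    have k1: "1 \<le> k" using assms by simp
    have sw: "summable (\<lambda>i. (1 - (1 - 1 / k) ^ i) * \<beta> i)"
      by (rule summable_weighted[OF f(3), where B=1]) (use f(2) pow_le1[OF k1] in auto)
    have le: "(1 - (1 - 1 / k') ^ i) * \<beta> i \<le> (1 - (1 - 1 / k) ^ i) * \<beta> i" for i
    proof -
      have "(1 - 1/k) ^ i \<le> (1 - 1/k') ^ i"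
        by (rule power_mono) (use assms in \<open>auto simp: field_simps\<close>)
      then show ?thesis using f(2) by (simp add: mult_right_mono)
    qed
    have W: "\<delta> \<le> (\<Sum>i. (1 - (1 - 1 / k) ^ i) * \<beta> i)"
      using f(6) suminf_le[OF le f(5) sw] by simp
    have g1: "\<gamma> sums (a * suminf \<beta> + \<theta> * k)"
      unfolding \<gamma>_def by (rule mix_sums1) (use f(3) in \<open>simp add: summable_sums\<close>)
    have g2: "(\<lambda>i. real i * \<gamma> i) sums (a * k' + real 1 * (\<theta> * k))"
      unfolding \<gamma>_def by (rule mix_sums[OF f(4)])
    have g3: "(\<lambda>i. (1 - (1 - 1 / k) ^ i) * \<gamma> i) sums
        (a * (\<Sum>i. (1 - (1 - 1 / k) ^ i) * \<beta> i) + (1 - (1 - 1 / k) ^ 1) * (\<theta> * k))"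
      unfolding \<gamma>_def by (rule mix_sums[OF summable_sums[OF sw]])
    have e2: "a * k' + real 1 * (\<theta> * k) = k" using assms by (simp add: a_def field_simps)
    have e3: "(1 - (1 - 1 / k) ^ 1) * (\<theta> * k) = \<theta>" using assms by simp
    have c3: "\<delta> \<le> a * (\<Sum>i. (1 - (1 - 1 / k) ^ i) * \<beta> i) + \<theta>"
    proof -
      have "a * \<delta> \<le> a * (\<Sum>i. (1 - (1 - 1 / k) ^ i) * \<beta> i)"
        using W a0 by (rule mult_left_mono)
      moreover have "a * \<delta> + \<theta> = \<delta>" using key by (simp add: a_def mult.commute)
      ultimately show ?thesis by linarith
    qed
    have gnn: "\<forall>i. 0 \<le> \<gamma> i" unfolding \<gamma>_def using f(2) a0 th0 assms by auto
    have g0: "\<gamma> 0 = 0" unfolding \<gamma>_def using f(1) by simp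
    have g2': "(\<lambda>i. real i * \<gamma> i) sums k" using g2 e2 by simp
    have g3': "(\<lambda>i. (1 - (1 - 1 / k) ^ i) * \<gamma> i) sums
        (a * (\<Sum>i. (1 - (1 - 1 / k) ^ i) * \<beta> i) + \<theta>)" using g3 e3 by simp
    have fg: "feas \<delta> k \<gamma>" unfolding feas_def
      using g0 gnn g1 g2' g3' c3 sums_summable sums_unique by metis
    have "size_exp \<delta> k \<le> (1/k) * suminf \<gamma>" using size_exp_le[OF fg] assms by simp
    also have "\<dots> = (1 - \<theta>) * ((1/k') * suminf \<beta>) + \<theta>"
    proof -
      have "suminf \<gamma> = a * suminf \<beta> + \<theta> * k" using g1 by (simp add: sums_iff)
      then show ?thesis using assms by (simp add: a_def divide_simps) (simp add: algebra_simps)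
    qed
    also have "\<dots> \<le> (1/k') * suminf \<beta> + \<theta>"
    proof -
      have "0 \<le> (1/k') * suminf \<beta>" using obj_nonneg[OF fe] assms by simp
      then have "(1 - \<theta>) * ((1/k') * suminf \<beta>) \<le> (1/k') * suminf \<beta>"
        by (rule mult_left_le_one_le) (use th0 th1 in auto)
      then show ?thesis by simp
    qed
    finally show "size_exp \<delta> k - \<theta> \<le> (1/k') * suminf \<beta>" by simp
  qed
  then show ?thesis unfolding \<theta>_def by simp
qed


lemma two_point:
  fixes A B k :: real
  assumes "2 \<le> N" "0 \<le> A" "0 \<le> B" "0 < k"
  defines "\<gamma> \<equiv> (\<lambda>i. 1 * (if i = 1 then A else 0) + (if i = N then B else 0))"
  shows "\<gamma> sums (A + B)" "(\<lambda>i. real i * \<gamma> i) sums (A + real N * B)"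
    "(\<lambda>i. (1 - (1 - 1/k) ^ i) * \<gamma> i) sums (A / k + (1 - (1 - 1/k) ^ N) * B)"
    "\<gamma> 0 = 0" "\<forall>i. 0 \<le> \<gamma> i"
proof -
  show "\<gamma> sums (A + B)" unfolding \<gamma>_def
    using mix_sums1[OF single_sums'[of 1 A], of 1 N B] by simp
  show "(\<lambda>i. real i * \<gamma> i) sums (A + real N * B)" unfolding \<gamma>_def
    using mix_sums[OF single_sums[of real 1 A], of 1 N B] by simp
  show "(\<lambda>i. (1 - (1 - 1/k) ^ i) * \<gamma> i) sums (A / k + (1 - (1 - 1/k) ^ N) * B)" unfolding \<gamma>_def
    using mix_sums[OF single_sums[of "\<lambda>i. (1 - (1 - 1/k) ^ i)" 1 A], of 1 N B] assms(4) by simp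
  show "\<gamma> 0 = 0" using assms by (simp add: \<gamma>_def)
  show "\<forall>i. 0 \<le> \<gamma> i" using assms by (simp add: \<gamma>_def)
qed

lemma below_delta:
  assumes "1 < k" "0 < \<delta>" "\<delta> < 1"
  shows "size_exp \<delta> k < \<delta>"
proof -
  define N where "N = nat \<lceil>k / \<delta>\<rceil> + 2"
  define q where "q = 1 - 1 / k"
  have q0: "0 < q" "q < 1" using assms by (auto simp: q_def field_simps)
  have N2: "2 \<le> N" by (simp add: N_def)
  have Nk: "k / \<delta> < real N" unfolding N_def
    using real_nat_ceiling_ge[of "k / \<delta>"] by simp
  define b where "b = (1 - q ^ N) * k / real N"
  have Npos: "real N > 0" using N2 by simp
  have bk: "b \<le> k / real N"
  proof -
    have "(1 - q ^ N) \<le> 1" using q0 by simp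
    then show ?thesis unfolding b_def using assms Npos by (simp add: divide_right_mono)
  qed
  have kN: "k / real N < \<delta>" using Nk assms Npos by (simp add: field_simps)
  have bd: "b < \<delta>" using bk kN by simp
  have Sq: "(1 - q ^ N) * k = (\<Sum>j<N. q ^ j)" unfolding q_def using S_eq assms by simp
  have "(\<Sum>j\<in>{0,1}. q ^ j) \<le> (\<Sum>j<N. q ^ j)"
    by (rule sum_mono2) (use N2 q0 in auto)
  then have "1 + q \<le> (1 - q ^ N) * k" using Sq by simp
  then have b1: "1 / real N < b" unfolding b_def using q0 Npos
    by (simp add: divide_strict_right_mono)
  define p where "p = (1 - \<delta>) / (1 - b)"
  have p0: "0 < p" "p \<le> 1" using bd assms by (auto simp: p_def)
  have pb1: "p * (1 - b) = 1 - \<delta>" using bd assms unfolding p_def by simp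
  have pb: "(1 - p) + p * b = \<delta>" using pb1 by (simp add: algebra_simps)
  have obj: "(1 - p) + p / real N < \<delta>"
  proof -
    have "p * (1 - b) = 1 - \<delta>" using bd assms unfolding p_def by simp
    moreover have "p * (1 - b) < p * (1 - 1 / real N)" using b1 p0 by simp
    ultimately show ?thesis using pb by (simp add: algebra_simps)
  qed
  define A where "A = (1 - p) * k"
  define B where "B = p * k / real N"
  have A0: "0 \<le> A" "0 \<le> B" using p0 assms Npos by (auto simp: A_def B_def)
  have k0: "0 < k" using assms by simp
  note tp = two_point[OF N2 A0 k0]
  let ?\<gamma> = "(\<lambda>i. 1 * (if i = 1 then A else 0) + (if i = N then B else 0))"
  have e2: "A + real N * B = k" using Npos by (simp add: A_def B_def algebra_simps)
  have e3: "A / k + (1 - (1 - 1/k) ^ N) * B = \<delta>"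
  proof -
    have "(1 - (1 - 1/k) ^ N) * B = p * b" unfolding B_def b_def q_def by simp
    then show ?thesis using assms pb by (simp add: A_def)
  qed
  have s2: "(\<lambda>i. real i * ?\<gamma> i) sums k" using tp(2) e2 by simp
  have s3: "(\<lambda>i. (1 - (1 - 1/k) ^ i) * ?\<gamma> i) sums \<delta>" using tp(3) e3 by simp
  have fe: "feas \<delta> k ?\<gamma>" unfolding feas_def
    apply (intro conjI)
    apply (rule tp(4))
    apply (rule tp(5))
    apply (rule sums_summable[OF tp(1)])
    apply (rule s2)
    apply (rule sums_summable[OF s3])
    using sums_unique[OF s3] by simp
  have "size_exp \<delta> k \<le> (1/k) * suminf ?\<gamma>" using size_exp_le[OF fe] assms by simp
  also have "\<dots> = (1 - p) + p / real N"
  proof -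
    have "suminf ?\<gamma> = A + B" using tp(1) by (simp add: sums_iff)
    then show ?thesis using assms unfolding A_def B_def by (simp add: add_divide_distrib)
  qed
  finally show ?thesis using obj by simp
qed


lemma div_helper:
  fixes A B d k k' :: real
  assumes "A * k + d \<le> B * k'" "k > 0"
  shows "A + d / k \<le> (k'/k) * B"
proof -
  have "(A * k + d) / k \<le> (B * k') / k" using assms by (simp add: divide_right_mono)
  then show ?thesis using assms(2) by (simp add: add_divide_distrib mult.commute)
qed

lemma strict_step:
  assumes "1 < k" "k < k'" "0 < \<delta>" "\<delta> < 1"
  shows "size_exp \<delta> k' < size_exp \<delta> k"
proof -
  define V where "V = size_exp \<delta> k'"
  have Vd: "V < \<delta>" unfolding V_def by (rule below_delta) (use assms in auto)
  define g where "g = \<delta> - V"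
  have g0: "g > 0" using Vd by (simp add: g_def)
  define dq where "dq = (1 - 1/k') - (1 - 1/k)"
  have dq0: "dq > 0" using assms by (simp add: dq_def field_simps)
  define \<sigma> where "\<sigma> = dq * g / (2 * k)"
  have \<sigma>0: "\<sigma> > 0" using dq0 g0 assms by (simp add: \<sigma>_def)
  define \<theta> where "\<theta> = \<sigma> / (\<delta> + \<sigma>)"
  have th: "0 < \<theta>" "\<theta> < 1" using \<sigma>0 assms by (auto simp: \<theta>_def)
  have th2: "(1 - \<theta>) * (\<delta> + \<sigma>) = \<delta>"
  proof -
    have "1 - \<theta> = \<delta> / (\<delta> + \<sigma>)" using \<sigma>0 assms unfolding \<theta>_def by (simp add: field_simps)
    then show ?thesis using \<sigma>0 assms by simp
  qed
  define N where "N = nat \<lceil>2 * k / \<delta>\<rceil> + 1"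
  have N1: "1 \<le> N" by (simp add: N_def)
  have Npos: "real N > 0" using N1 by simp
  have NN: "2 * k / \<delta> \<le> real N" unfolding N_def
    using real_nat_ceiling_ge[of "2 * k / \<delta>"] by simp
  have invN: "1 / real N \<le> \<delta> / (2 * k)"
    using NN assms Npos by (simp add: field_simps)
  define \<gamma>0 where "\<gamma>0 = min (\<theta> * \<delta> / (2 * k)) (g / 2)"
  have \<gamma>00: "\<gamma>0 > 0" using th assms g0 by (simp add: \<gamma>0_def)
  have "V + \<gamma>0 \<le> size_exp \<delta> k"
  proof (rule size_exp_ge)
    show "1 \<le> k" "\<delta> \<le> 1" using assms by auto
    fix \<beta> assume fe: "feas \<delta> k \<beta>"
    from fe have f: "\<beta> 0 = 0" "\<forall>i. \<beta> i \<ge> 0" "summable \<beta>" "(\<lambda>i. real i * \<beta> i) sums k"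
      "summable (\<lambda>i. (1 - (1 - 1 / k) ^ i) * \<beta> i)"
      "(\<Sum>i. (1 - (1 - 1 / k) ^ i) * \<beta> i) \<ge> \<delta>" unfolding feas_def by auto
    define Ob where "Ob = (1/k) * suminf \<beta>"
    have Oge: "\<delta> / k \<le> Ob" unfolding Ob_def using obj_ge[OF fe] assms by simp
    define chi where "chi = (\<lambda>i. (if 2 \<le> i then 1 else 0) * \<beta> i)"
    have k1: "1 \<le> k" "1 \<le> k'" using assms by auto
    have schi: "summable chi" unfolding chi_def
      by (rule summable_weighted[OF f(3), where B=1]) (use f(2) in auto)
    define X where "X = suminf chi"
    define W where "W = (\<Sum>i. (1 - (1 - 1 / k) ^ i) * \<beta> i)"
    have sY: "summable (\<lambda>i. (1 - (1 - 1 / k') ^ i) * \<beta> i)"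
      by (rule summable_weighted[OF f(3), where B=1]) (use f(2) pow_le1[OF k1(2)] in auto)
    define Y where "Y = (\<Sum>i. (1 - (1 - 1 / k') ^ i) * \<beta> i)"
    show "V + \<gamma>0 \<le> (1/k) * suminf \<beta>"
    proof (cases "X < g / 2")
      case True
      have le: "(1 - (1 - 1 / k) ^ i) * \<beta> i \<le> (1/k) * \<beta> i + chi i" for i
      proof -
        consider "i = 0" | "i = 1" | "2 \<le> i" by linarith
        then show ?thesis
        proof cases
          case 1 then show ?thesis using f(1) by (simp add: chi_def)
        next
          case 2 then show ?thesis by (simp add: chi_def)
        next
          case 3
          have "(1 - (1 - 1 / k) ^ i) * \<beta> i \<le> \<beta> i"
            using pow_le1[OF k1(1)] f(2) by (simp add: mult_left_le_one_le)
          moreover have "0 \<le> (1/k) * \<beta> i" using f(2) assms by simp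
          ultimately show ?thesis using 3 by (simp add: chi_def)
        qed
      qed
      have sr: "summable (\<lambda>i. (1/k) * \<beta> i + chi i)"
        by (rule summable_add[OF summable_mult[OF f(3)] schi])
      have "W \<le> (\<Sum>i. (1/k) * \<beta> i + chi i)" unfolding W_def
        by (rule suminf_le[OF le f(5) sr])
      also have "\<dots> = Ob + X"
        unfolding Ob_def X_def using suminf_add[OF summable_mult[OF f(3)] schi, of "1/k"] suminf_mult[OF f(3), of "1/k"]
        by simp
      finally have "\<delta> \<le> Ob + X" using f(6) W_def by simp
      then have "V + g / 2 \<le> Ob" using True g_def by linarith
      then show ?thesis using \<gamma>0_def Ob_def by simp
    next
      case False
      have le: "(1 - (1 - 1 / k) ^ i) * \<beta> i + (dq / k) * chi i \<le> (k'/k) * ((1 - (1 - 1 / k') ^ i) * \<beta> i)" for i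
      proof (cases "2 \<le> i")
        case True
        have "(1 - (1 - 1/k) ^ i) * k + dq \<le> (1 - (1 - 1/k') ^ i) * k'"
          using S_strict[OF k1(1) _ True, of k'] assms by (simp add: dq_def)
        then have "(1 - (1 - 1/k) ^ i) + dq / k \<le> (k'/k) * (1 - (1 - 1/k') ^ i)"
          using assms by (intro div_helper) auto
        then have "((1 - (1 - 1/k) ^ i) + dq / k) * \<beta> i \<le> ((k'/k) * (1 - (1 - 1/k') ^ i)) * \<beta> i"
          by (rule mult_right_mono) (use f(2) in auto)
        then show ?thesis using True by (simp add: chi_def algebra_simps)
      next
        case False
        have "(1 - (1 - 1/k) ^ i) * k \<le> (1 - (1 - 1/k') ^ i) * k'"
          using S_mono[OF k1(1), of k'] assms by simp
        then have "(1 - (1 - 1/k) ^ i) \<le> (k'/k) * (1 - (1 - 1/k') ^ i)"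
          using assms div_helper[of "1 - (1 - 1/k) ^ i" k 0] by auto
        then have "(1 - (1 - 1/k) ^ i) * \<beta> i \<le> ((k'/k) * (1 - (1 - 1/k') ^ i)) * \<beta> i"
          by (rule mult_right_mono) (use f(2) in auto)
        then show ?thesis using False by (simp add: chi_def algebra_simps)
      qed
      have sl: "summable (\<lambda>i. (1 - (1 - 1 / k) ^ i) * \<beta> i + (dq / k) * chi i)"
        by (rule summable_add[OF f(5) summable_mult[OF schi]])
      have "(\<Sum>i. (1 - (1 - 1 / k) ^ i) * \<beta> i + (dq / k) * chi i) \<le> (\<Sum>i. (k'/k) * ((1 - (1 - 1 / k') ^ i) * \<beta> i))"
        by (rule suminf_le[OF le sl summable_mult[OF sY]])
      moreover have "(\<Sum>i. (1 - (1 - 1 / k) ^ i) * \<beta> i + (dq / k) * chi i) = W + (dq / k) * X"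
        unfolding W_def X_def using suminf_add[OF f(5) summable_mult[OF schi, of "dq/k"]] suminf_mult[OF schi, of "dq/k"]
        by simp
      moreover have "(\<Sum>i. (k'/k) * ((1 - (1 - 1 / k') ^ i) * \<beta> i)) = (k'/k) * Y"
        unfolding Y_def using suminf_mult[OF sY, of "k'/k"] by simp
      ultimately have WY: "W + (dq / k) * X \<le> (k'/k) * Y" by simp
      have "(dq / k) * (g / 2) \<le> (dq / k) * X" using False dq0 assms
        by (intro mult_left_mono) auto
      then have slack: "\<delta> + \<sigma> \<le> (k'/k) * Y"
        using WY f(6) W_def by (simp add: \<sigma>_def)
      define a where "a = (1 - \<theta>) * (k'/k)"
      define B where "B = \<theta> * k' / real N"
      define \<gamma> where "\<gamma> = (\<lambda>i. a * \<beta> i + (if i = N then B else 0))"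
      have a0: "0 \<le> a" "0 \<le> B" using th assms Npos by (auto simp: a_def B_def)
      have g1: "\<gamma> sums (a * suminf \<beta> + B)"
        unfolding \<gamma>_def by (rule mix_sums1) (use f(3) in \<open>simp add: summable_sums\<close>)
      have g2: "(\<lambda>i. real i * \<gamma> i) sums (a * k + real N * B)"
        unfolding \<gamma>_def by (rule mix_sums[OF f(4)])
      have g3: "(\<lambda>i. (1 - (1 - 1 / k') ^ i) * \<gamma> i) sums (a * Y + (1 - (1 - 1 / k') ^ N) * B)"
        unfolding \<gamma>_def Y_def by (rule mix_sums[OF summable_sums[OF sY]])
      have e2: "a * k + real N * B = k'" using assms Npos by (simp add: a_def B_def) (simp add: algebra_simps)
      have c3: "\<delta> \<le> a * Y + (1 - (1 - 1 / k') ^ N) * B"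
      proof -
        have "(1 - \<theta>) * (\<delta> + \<sigma>) \<le> (1 - \<theta>) * ((k'/k) * Y)"
          using slack th by (intro mult_left_mono) auto
        then have "\<delta> \<le> a * Y" using th2 by (simp add: a_def)
        moreover have "0 \<le> (1 - (1 - 1 / k') ^ N) * B" using pow_le1[OF k1(2)] a0 by simp
        ultimately show ?thesis by simp
      qed
      have gnn: "\<forall>i. 0 \<le> \<gamma> i" unfolding \<gamma>_def using f(2) a0 by auto
      have gz: "\<gamma> 0 = 0" unfolding \<gamma>_def using f(1) N1 by simp
      have g2': "(\<lambda>i. real i * \<gamma> i) sums k'" using g2 e2 by simp
      have fg: "feas \<delta> k' \<gamma>" unfolding feas_def
        apply (intro conjI)
        apply (rule gz)
        apply (rule gnn)
        apply (rule sums_summable[OF g1])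
        apply (rule g2')
        apply (rule sums_summable[OF g3])
        using sums_unique[OF g3] c3 by simp
      have "V \<le> (1/k') * suminf \<gamma>" unfolding V_def using size_exp_le[OF fg] assms by simp
      also have "(1/k') * suminf \<gamma> = (1 - \<theta>) * Ob + \<theta> / real N"
      proof -
        have "suminf \<gamma> = a * suminf \<beta> + B" using g1 by (simp add: sums_iff)
        then show ?thesis using assms unfolding Ob_def a_def B_def by (simp add: field_simps)
      qed
      also have "\<dots> \<le> Ob - \<theta> * \<delta> / (2 * k)"
      proof -
        have "\<theta> * (1 / real N) \<le> \<theta> * (\<delta> / (2 * k))" using invN th by (intro mult_left_mono) auto
        moreover have "\<theta> * (\<delta> / k) \<le> \<theta> * Ob" using Oge th by (intro mult_left_mono) auto
        ultimately show ?thesis by (simp add: algebra_simps)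
      qed
      finally have "V + \<theta> * \<delta> / (2 * k) \<le> Ob" by simp
      then show ?thesis using \<gamma>0_def Ob_def by simp
    qed
  qed
  then show ?thesis using \<gamma>00 V_def by simp
qed


lemma lip_one:
  assumes "1 < x" "x < x'" "0 < \<delta>" "\<delta> < 1"
  shows "\<bar>size_exp \<delta> x - size_exp \<delta> x'\<bar> \<le> \<bar>x - x'\<bar> / (1 - \<delta>)"
proof -
  have m: "size_exp \<delta> x' \<le> size_exp \<delta> x" by (rule size_exp_mono) (use assms in auto)
  have l: "size_exp \<delta> x \<le> size_exp \<delta> x' + \<delta> * (x' - x) / (x' - \<delta> * x)"
    by (rule lip_step) (use assms in auto)
  have den: "(1 - \<delta>) \<le> x' - \<delta> * x"
  proof -
    have "\<delta> * (x - 1) \<le> x - 1" using assms by (intro mult_left_le_one_le) auto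
    then have "\<delta> * x - \<delta> \<le> x - 1" by (simp add: right_diff_distrib)
    then show ?thesis using assms by linarith
  qed
  have "\<delta> * (x' - x) / (x' - \<delta> * x) \<le> (x' - x) / (x' - \<delta> * x)"
    using assms den by (intro divide_right_mono) auto
  also have "\<dots> \<le> (x' - x) / (1 - \<delta>)"
    using assms den by (intro divide_left_mono) auto
  finally have "\<delta> * (x' - x) / (x' - \<delta> * x) \<le> (x' - x) / (1 - \<delta>)" .
  moreover have "\<bar>x - x'\<bar> = x' - x" using assms by simp
  ultimately show ?thesis using m l by simp
qed

lemma lip_abs:
  assumes "1 < x" "1 < x'" "0 < \<delta>" "\<delta> < 1"
  shows "\<bar>size_exp \<delta> x - size_exp \<delta> x'\<bar> \<le> \<bar>x - x'\<bar> / (1 - \<delta>)"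
proof -
  consider "x < x'" | "x = x'" | "x' < x" by linarith
  then show ?thesis
  proof cases
    case 1 then show ?thesis using lip_one assms by blast
  next
    case 2 then show ?thesis using assms by simp
  next
    case 3 then show ?thesis using lip_one[of x' x \<delta>] assms by (simp add: abs_minus_commute)
  qed
qed

lemma large_k:
  assumes "0 < \<delta>" "\<delta> < 1" "0 < y"
  shows "\<exists>k1. \<forall>k\<ge>k1. size_exp \<delta> k < y"
proof -
  define N where "N = nat \<lceil>1 / y\<rceil> + 1"
  have N1: "1 \<le> N" by (simp add: N_def)
  have Ny: "1 / y < real N" unfolding N_def using real_nat_ceiling_ge[of "1 / y"] by simp
  have Npos: "real N > 0" using N1 by simp
  have invN: "1 / real N < y" using Ny assms Npos by (simp add: field_simps)
  define k1 where "k1 = max 2 ((real N - 1) / (1 - \<delta>))"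
  have "size_exp \<delta> k < y" if kk: "k \<ge> k1" for k
  proof -
    have k2: "k \<ge> 2" "k \<ge> (real N - 1) / (1 - \<delta>)" using kk by (auto simp: k1_def)
    define q where "q = 1 - 1 / k"
    have q0: "0 \<le> q" "q \<le> 1" using k2 by (auto simp: q_def)
    have "1 + real (N - 1) * (- 1 / k) \<le> (1 + (- 1 / k)) ^ (N - 1)"
      by (rule Bernoulli_inequality) (use k2 in auto)
    then have B: "1 - real (N - 1) / k \<le> q ^ (N - 1)" by (simp add: q_def)
    have "real (N - 1) / k \<le> 1 - \<delta>"
    proof -
      have "real (N - 1) = real N - 1" using N1 by simp
      then have "real (N - 1) \<le> (1 - \<delta>) * k" using k2 assms by (simp add: field_simps)
      then show ?thesis using k2 by (simp add: field_simps)
    qed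
    with B have qd: "\<delta> \<le> q ^ (N - 1)" by simp
    have "(\<Sum>j<N. q ^ (N - 1)) \<le> (\<Sum>j<N. q ^ j)"
      by (rule sum_mono) (use q0 in \<open>auto intro: power_decreasing\<close>)
    then have "real N * q ^ (N - 1) \<le> (1 - q ^ N) * k" using S_eq[of k N] k2 by (simp add: q_def)
    moreover have "real N * \<delta> \<le> real N * q ^ (N - 1)" using qd by (intro mult_left_mono) auto
    ultimately have "real N * \<delta> \<le> (1 - q ^ N) * k" by linarith
    then have c: "\<delta> \<le> (1 - q ^ N) * (k / real N)" using Npos by (simp add: field_simps)
    define \<gamma> where "\<gamma> = (\<lambda>i. 0 * (\<lambda>_. 0::real) i + (if i = N then k / real N else 0))"
    have g1: "\<gamma> sums (k / real N)" unfolding \<gamma>_def using single_sums'[of N "k / real N"] by simp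
    have g2: "(\<lambda>i. real i * \<gamma> i) sums k" unfolding \<gamma>_def
      using single_sums[of real N "k / real N"] Npos by simp
    have g3: "(\<lambda>i. (1 - (1 - 1/k) ^ i) * \<gamma> i) sums ((1 - q ^ N) * (k / real N))"
      unfolding \<gamma>_def q_def using single_sums[of "\<lambda>i. (1 - (1 - 1/k) ^ i)" N "k / real N"] by simp
    have fe: "feas \<delta> k \<gamma>" unfolding feas_def
      apply (intro conjI)
      using N1 k2 apply (simp add: \<gamma>_def)
      using N1 k2 apply (simp add: \<gamma>_def)
      apply (rule sums_summable[OF g1])
      apply (rule g2)
      apply (rule sums_summable[OF g3])
      using sums_unique[OF g3] c by simp
    have "size_exp \<delta> k \<le> (1/k) * suminf \<gamma>" using size_exp_le[OF fe] k2 by simp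
    also have "\<dots> = 1 / real N" using sums_unique[OF g1, symmetric] k2 by simp
    finally show ?thesis using invN by simp
  qed
  then show ?thesis by blast
qed

lemma inv_props:
  assumes "0 < \<delta>" "\<delta> < 1" "0 < y" "y < \<delta>"
  shows "size_exp_inv \<delta> y > 1 \<and> size_exp \<delta> (size_exp_inv \<delta> y) = y"
proof -
  define t where "t = \<delta> / y"
  define k0 where "k0 = (1 + t) / 2"
  have dy: "1 < t" using assms by (simp add: t_def)
  have k0a: "1 < k0" using dy unfolding k0_def by (simp add: field_simps)
  have k0b: "k0 < t" using dy unfolding k0_def by (simp add: field_simps)
  have f0: "y < size_exp \<delta> k0"
  proof -
    have "\<delta> / k0 \<le> size_exp \<delta> k0"
    proof (rule size_exp_ge)
      show "1 \<le> k0" using k0a by simp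
      show "\<delta> \<le> 1" using assms by simp
      fix \<beta> assume "feas \<delta> k0 \<beta>"
      from obj_ge[OF this] k0a show "\<delta> / k0 \<le> 1 / k0 * suminf \<beta>" by simp
    qed
    moreover have "y < \<delta> / k0"
    proof -
      have "k0 * y < \<delta>" using k0b assms by (simp add: t_def pos_less_divide_eq)
      then show ?thesis using k0a by (simp add: pos_less_divide_eq mult.commute)
    qed
    ultimately show ?thesis by simp
  qed
  obtain k1' where k1': "\<forall>k\<ge>k1'. size_exp \<delta> k < y" using large_k assms by blast
  define k1 where "k1 = max k1' (k0 + 1)"
  have f1: "size_exp \<delta> k1 < y" using k1' by (simp add: k1_def)
  have k01: "k0 \<le> k1" by (simp add: k1_def)
  have "(1 / (1 - \<delta>))-lipschitz_on {k0..k1} (size_exp \<delta>)"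
  proof (rule lipschitz_onI)
    fix x x' assume "x \<in> {k0..k1}" "x' \<in> {k0..k1}"
    then have "1 < x" "1 < x'" using k0a by auto
    from lip_abs[OF this assms(1,2)]
    show "dist (size_exp \<delta> x) (size_exp \<delta> x') \<le> 1 / (1 - \<delta>) * dist x x'"
      by (simp add: dist_real_def)
  next
    show "0 \<le> 1 / (1 - \<delta>)" using assms by simp
  qed
  then have cont: "continuous_on {k0..k1} (size_exp \<delta>)" by (rule lipschitz_on_continuous_on)
  have "\<exists>x. k0 \<le> x \<and> x \<le> k1 \<and> size_exp \<delta> x = y"
    by (rule IVT2'[OF _ _ k01 cont]) (use f0 f1 in auto)
  then obtain K where K: "k0 \<le> K" "K \<le> k1" "size_exp \<delta> K = y" by blast
  have K1: "1 < K" using K k0a by simp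
  have uniq: "k = K" if "k > 1" "size_exp \<delta> k = y" for k
  proof (rule ccontr)
    assume "k \<noteq> K"
    then consider "k < K" | "K < k" by linarith
    then show False
    proof cases
      case 1
      have "size_exp \<delta> K < size_exp \<delta> k" by (rule strict_step[OF that(1) 1 assms(1,2)])
      then show ?thesis using K that by simp
    next
      case 2
      have "size_exp \<delta> k < size_exp \<delta> K" by (rule strict_step[OF K1 2 assms(1,2)])
      then show ?thesis using K that by simp
    qed
  qed
  have "size_exp_inv \<delta> y = K" unfolding size_exp_inv_def
  proof (rule the_equality)
    show "1 < K \<and> size_exp \<delta> K = y" using K1 K by simp
    fix k assume "1 < k \<and> size_exp \<delta> k = y"
    then show "k = K" using uniq by blast
  qed
  then show ?thesis using K1 K by simp
qed



lemma card_filter_sum: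
  "finite A \<Longrightarrow> real (card {x\<in>A. P x}) = (\<Sum>x\<in>A. if P x then 1 else 0)"
proof -
  assume "finite A"
  then have "(\<Sum>x\<in>{x\<in>A. P x}. (1::real)) = (\<Sum>x\<in>A. if P x then 1 else 0)"
    by (rule sum.inter_filter)
  then show ?thesis by simp
qed

lemma hyper_step:
  fixes M t :: nat
  assumes "1 \<le> M"
  shows "real ((M - 1) choose t) * real M = real (M choose t) * (real M - real t) \<or> M < t"
proof (cases "t \<le> M")
  case True
  have "(M - t) * (M choose t) = M * ((M - 1) choose t)" by (rule binomial_absorb_comp)
  then have "real (M - t) * real (M choose t) = real M * real ((M - 1) choose t)"
    by (metis of_nat_mult)
  then show ?thesis using True by (simp add: of_nat_diff algebra_simps)
qed simp

lemma hyper_lower: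
  fixes s t a d :: nat
  assumes "a \<le> d" "d + t < s"
  shows "(1 - real t / real (s - d)) ^ a \<le> real ((s - a) choose t) / real (s choose t)"
  using assms(1)
proof (induction a)
  case 0
  have "s choose t > 0" using assms by simp
  then show ?case by simp
next
  case (Suc a)
  have IH: "(1 - real t / real (s - d)) ^ a \<le> real ((s - a) choose t) / real (s choose t)"
    using Suc by simp
  define M where "M = s - a"
  have M1: "1 \<le> M" using Suc assms by (simp add: M_def)
  have MT: "t \<le> M - 1" using Suc assms by (simp add: M_def)
  have Md: "s - d < M" using Suc assms by (simp add: M_def)
  have Cpos: "real (s choose t) > 0" using assms by simp
  have sd: "real (s - d) > 0" using assms by simp
  have base: "0 \<le> 1 - real t / real (s - d)" using assms sd by (simp add: field_simps)
  have eq: "s - Suc a = M - 1" by (simp add: M_def)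
  have h: "real ((M - 1) choose t) * real M = real (M choose t) * (real M - real t)"
    using hyper_step[OF M1, of t] MT M1 by auto
  have Mpos: "real M > 0" using M1 by simp
  have r: "real ((M - 1) choose t) = real (M choose t) * (1 - real t / real M)"
    using h Mpos by (simp add: field_simps)
  have f2: "1 - real t / real (s - d) \<le> 1 - real t / real M"
  proof -
    have "real t / real M \<le> real t / real (s - d)"
      using Md sd by (intro divide_left_mono) auto
    then show ?thesis by simp
  qed
  have "(1 - real t / real (s - d)) ^ a * (1 - real t / real (s - d))
      \<le> (real (M choose t) / real (s choose t)) * (1 - real t / real M)"
    using IH f2 base Cpos by (intro mult_mono) (auto simp: M_def)
  also have "\<dots> = real ((M - 1) choose t) / real (s choose t)"
    using r by simp
  finally show ?case using eq by (simp add: mult.commute)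
qed

lemma nbhd_alt: "nbhd m d nbr T = {v. v < m \<and> T \<inter> nbr v ` {0..<d} \<noteq> {}}"
  by (auto simp: nbhd_def)

lemma double_count:
  assumes "cd_regular c d n m nbr" "S \<subseteq> {0..<n}"
  shows "(\<Sum>v<m. real (card (S \<inter> nbr v ` {0..<d}))) = real c * real (card S)"
proof -
  have fin: "finite S" using assms(2) finite_subset by blast
  have "(\<Sum>v<m. real (card (S \<inter> nbr v ` {0..<d}))) = (\<Sum>v<m. \<Sum>u\<in>S. if u \<in> nbr v ` {0..<d} then 1 else 0)"
  proof (rule sum.cong)
    fix v
    have "S \<inter> nbr v ` {0..<d} = {u\<in>S. u \<in> nbr v ` {0..<d}}" by auto
    then show "real (card (S \<inter> nbr v ` {0..<d})) = (\<Sum>u\<in>S. if u \<in> nbr v ` {0..<d} then 1 else 0)"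
      using card_filter_sum[OF fin] by simp
  qed simp
  also have "\<dots> = (\<Sum>u\<in>S. \<Sum>v<m. if u \<in> nbr v ` {0..<d} then 1 else 0)"
    by (rule sum.swap)
  also have "\<dots> = (\<Sum>u\<in>S. real c)"
  proof (rule sum.cong)
    fix u assume "u \<in> S"
    then have un: "u < n" using assms(2) by auto
    have "{v\<in>{..<m}. u \<in> nbr v ` {0..<d}} = {v. v < m \<and> u \<in> nbr v ` {0..<d}}" by auto
    then have "real (card {v\<in>{..<m}. u \<in> nbr v ` {0..<d}}) = real c"
      using assms(1) un unfolding cd_regular_def by simp
    then show "(\<Sum>v<m. if u \<in> nbr v ` {0..<d} then 1 else 0) = real c"
      using card_filter_sum[of "{..<m}" "\<lambda>v. u \<in> nbr v ` {0..<d}"] by simp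
  qed simp
  finally show ?thesis by simp
qed

lemma local_weight:
  assumes "cd_regular c d n m nbr" "v < m"
  shows "card {i. (\<lambda>i. if i < d then x (nbr v i) else False) i} = card ({u. x u} \<inter> nbr v ` {0..<d})"
proof -
  have inj: "inj_on (nbr v) {0..<d}" using assms unfolding cd_regular_def by auto
  have e1: "{i. (\<lambda>i. if i < d then x (nbr v i) else False) i} = {i\<in>{0..<d}. x (nbr v i)}" by auto
  have e2: "{u. x u} \<inter> nbr v ` {0..<d} = nbr v ` {i\<in>{0..<d}. x (nbr v i)}" by auto
  have "card (nbr v ` {i\<in>{0..<d}. x (nbr v i)}) = card {i\<in>{0..<d}. x (nbr v i)}"
    by (rule card_image) (rule inj_on_subset[OF inj], auto)
  then show ?thesis using e1 e2 by simp
qed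

lemma weight_ge_d0:
  assumes "min_dist C0 = enat d0" "w \<in> C0" "(\<lambda>_. False) \<in> C0" "w \<noteq> (\<lambda>_. False)"
  shows "d0 \<le> card {i. w i}"
proof -
  have "min_dist C0 \<le> enat (hamming_dist (fst (w, \<lambda>_. False)) (snd (w, \<lambda>_. False)))"
    unfolding min_dist_def
    using INF_lower[of "(w, \<lambda>_. False)" "{(x, y). x \<in> C0 \<and> y \<in> C0 \<and> x \<noteq> y}"
        "\<lambda>p. enat (hamming_dist (fst p) (snd p))"] assms by auto
  then show ?thesis using assms(1) by (simp add: hamming_dist_def)
qed


lemma hit_count:
  assumes "finite S" "t \<le> card S"
  shows "real (card {T\<in>{T. T \<subseteq> S \<and> card T = t}. T \<inter> X \<noteq> {}})
       = real (card S choose t) - real (card (S - X) choose t)"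
proof -
  define F where "F = {T. T \<subseteq> S \<and> card T = t}"
  have finF: "finite F" unfolding F_def using assms(1) by simp
  have cF: "card F = card S choose t" unfolding F_def by (rule n_subsets[OF assms(1)])
  have av: "{T\<in>F. \<not> (T \<inter> X \<noteq> {})} = {T. T \<subseteq> S - X \<and> card T = t}"
    unfolding F_def by auto
  have cav: "card {T. T \<subseteq> S - X \<and> card T = t} = card (S - X) choose t"
    by (rule n_subsets) (use assms in simp)
  have "real (card {T\<in>F. T \<inter> X \<noteq> {}}) + real (card {T\<in>F. \<not> (T \<inter> X \<noteq> {})}) = real (card F)"
  proof -
    have "real (card {T\<in>F. T \<inter> X \<noteq> {}}) + real (card {T\<in>F. \<not> (T \<inter> X \<noteq> {})})
      = (\<Sum>T\<in>F. (if T \<inter> X \<noteq> {} then 1 else 0) + (if \<not> (T \<inter> X \<noteq> {}) then 1 else 0))"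
      using card_filter_sum[OF finF] by (simp add: sum.distrib)
    also have "\<dots> = (\<Sum>T\<in>F. 1)" by (rule sum.cong) auto
    finally show ?thesis by simp
  qed
  then show ?thesis using av cav cF unfolding F_def by simp
qed

lemma sum_beta:
  fixes a :: "nat \<Rightarrow> nat" and h :: "nat \<Rightarrow> real" and C :: real
  assumes "\<And>v. v < m \<Longrightarrow> a v \<le> s"
  defines "\<beta> \<equiv> (\<lambda>i. if i = 0 then 0 else real (card {v\<in>{..<m}. a v = i}) * C)"
  shows "(\<lambda>i. h i * \<beta> i) sums (C * (\<Sum>v<m. if a v = 0 then 0 else h (a v)))"
proof -
  have z: "h i * \<beta> i = 0" if "i \<notin> {..s}" for i
  proof -
    have "{v\<in>{..<m}. a v = i} = {}" using that assms(1) by fastforce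
    then show ?thesis unfolding \<beta>_def by simp
  qed
  have "(\<Sum>i\<le>s. h i * \<beta> i) = (\<Sum>i\<le>s. \<Sum>v<m. C * (if i \<noteq> 0 \<and> a v = i then h i else 0))"
  proof (rule sum.cong)
    fix i
    show "h i * \<beta> i = (\<Sum>v<m. C * (if i \<noteq> 0 \<and> a v = i then h i else 0))"
    proof (cases "i = 0")
      case True then show ?thesis unfolding \<beta>_def by simp
    next
      case False
      have "real (card {v\<in>{..<m}. a v = i}) = (\<Sum>v<m. if a v = i then 1 else 0)"
        by (rule card_filter_sum) simp
      then have "h i * \<beta> i = C * h i * (\<Sum>v<m. if a v = i then 1 else 0)"
        unfolding \<beta>_def using False by simp
      also have "\<dots> = (\<Sum>v<m. C * (if i \<noteq> 0 \<and> a v = i then h i else 0))"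
        using False by (simp add: sum_distrib_left if_distrib cong: if_cong)
      finally show ?thesis .
    qed
  qed simp
  also have "\<dots> = (\<Sum>v<m. \<Sum>i\<le>s. C * (if i \<noteq> 0 \<and> a v = i then h i else 0))"
    by (rule sum.swap)
  also have "\<dots> = (\<Sum>v<m. C * (if a v = 0 then 0 else h (a v)))"
  proof (rule sum.cong)
    fix v assume "v \<in> {..<m}"
    then have av: "a v \<le> s" using assms(1) by simp
    have "(\<Sum>i\<le>s. C * (if i \<noteq> 0 \<and> a v = i then h i else 0))
        = (\<Sum>i\<le>s. if i = a v then C * (if a v = 0 then 0 else h (a v)) else 0)"
      by (rule sum.cong) auto
    also have "\<dots> = C * (if a v = 0 then 0 else h (a v))" using av by (simp add: sum.delta')
    finally show "(\<Sum>i\<le>s. C * (if i \<noteq> 0 \<and> a v = i then h i else 0)) = C * (if a v = 0 then 0 else h (a v))" .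
  qed simp
  finally have e: "(\<Sum>i\<le>s. h i * \<beta> i) = C * (\<Sum>v<m. if a v = 0 then 0 else h (a v))"
    by (simp add: sum_distrib_left)
  have "(\<lambda>i. h i * \<beta> i) sums (\<Sum>i\<le>s. h i * \<beta> i)"
    by (rule sums_finite) (use z in auto)
  then show ?thesis using e by simp
qed


lemma supp_sub:
  assumes "x \<in> tanner_code n m d nbr C0"
  shows "{u. x u} \<subseteq> {0..<n}"
  using assms unfolding tanner_code_def bvecs_def by (auto simp: not_le[symmetric])

lemma nbhd_card_sum:
  "real (card (nbhd m d nbr T)) = (\<Sum>v<m. if T \<inter> nbr v ` {0..<d} \<noteq> {} then 1 else 0)"
proof -
  have "nbhd m d nbr T = {v\<in>{..<m}. T \<inter> nbr v ` {0..<d} \<noteq> {}}" by (auto simp: nbhd_def)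
  then show ?thesis using card_filter_sum[of "{..<m}" "\<lambda>v. T \<inter> nbr v ` {0..<d} \<noteq> {}"] by simp
qed

lemma nbhd_le:
  assumes exp: "bipartite_expander c d \<alpha> \<delta> n m nbr"
    and xin: "x \<in> tanner_code n m d nbr C0"
    and z: "(\<lambda>_. False) \<in> C0" and md: "min_dist C0 = enat d0"
  shows "real (card (nbhd m d nbr {u. x u})) * real d0 \<le> real c * real (card {u. x u})"
proof -
  define S where "S = {u. x u}"
  have reg: "cd_regular c d n m nbr" using exp unfolding bipartite_expander_def by simp
  have Sn: "S \<subseteq> {0..<n}" unfolding S_def by (rule supp_sub[OF xin])
  have "real (card (nbhd m d nbr S)) * real d0 = (\<Sum>v<m. if S \<inter> nbr v ` {0..<d} \<noteq> {} then real d0 else 0)"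
    unfolding nbhd_card_sum sum_distrib_right by (rule sum.cong) auto
  also have "\<dots> \<le> (\<Sum>v<m. real (card (S \<inter> nbr v ` {0..<d})))"
  proof (rule sum_mono)
    fix v assume vm: "v \<in> {..<m}"
    show "(if S \<inter> nbr v ` {0..<d} \<noteq> {} then real d0 else 0) \<le> real (card (S \<inter> nbr v ` {0..<d}))"
    proof (cases "S \<inter> nbr v ` {0..<d} \<noteq> {}")
      case True
      define w where "w = (\<lambda>i. if i < d then x (nbr v i) else False)"
      have wC: "w \<in> C0" using xin vm unfolding tanner_code_def w_def by auto
      have wne: "w \<noteq> (\<lambda>_. False)"
      proof
        assume "w = (\<lambda>_. False)"
        moreover from True obtain i where "i < d" "x (nbr v i)" unfolding S_def by auto
        ultimately show False unfolding w_def by (metis)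
      qed
      have "d0 \<le> card {i. w i}" by (rule weight_ge_d0[OF md wC z wne])
      also have "card {i. w i} = card (S \<inter> nbr v ` {0..<d})"
        unfolding w_def S_def using local_weight[OF reg] vm by simp
      finally show ?thesis using True by simp
    qed simp
  qed
  also have "\<dots> = real c * real (card S)" by (rule double_count[OF reg Sn])
  finally show ?thesis unfolding S_def .
qed


lemma comb_main:
  assumes exp: "bipartite_expander c d \<alpha> \<delta> n m nbr"
    and xin: "x \<in> tanner_code n m d nbr C0"
    and c1: "1 \<le> c" and d1: "\<delta> \<le> 1"
    and t1: "1 \<le> t" and ts: "d + t < card {u. x u}" and ta: "real t \<le> \<alpha> * real n"
  shows "size_exp (\<delta> * (real (card {u. x u} - d) / real (card {u. x u}))) (real (card {u. x u} - d) / real t)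
           \<le> real (card (nbhd m d nbr {u. x u})) / (real c * real (card {u. x u}))"
proof -
  define S where "S = {u. x u}"
  define s where "s = card S"
  define X where "X = (\<lambda>v. nbr v ` {0..<d})"
  define a where "a = (\<lambda>v. card (S \<inter> X v))"
  define F where "F = {T. T \<subseteq> S \<and> card T = t}"
  have reg: "cd_regular c d n m nbr" using exp unfolding bipartite_expander_def by simp
  have Sn: "S \<subseteq> {0..<n}" unfolding S_def by (rule supp_sub[OF xin])
  have finS: "finite S" using Sn finite_subset by blast
  have ts'': "d + t < s" using ts by (simp add: s_def S_def)
  have ts': "t < s" using ts'' by simp
  have s0: "0 < s" using ts' by simp
  have finF: "finite F" unfolding F_def using finS by simp
  have as: "a v \<le> s" for v unfolding a_def s_def by (rule card_mono[OF finS]) auto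
  have ad: "a v \<le> d" for v
  proof -
    have "a v \<le> card (X v)" unfolding a_def by (rule card_mono) (auto simp: X_def)
    also have "card (X v) \<le> d" unfolding X_def using card_image_le[of "{0..<d}" "nbr v"] by simp
    finally show ?thesis .
  qed
  have step1: "\<delta> * real c * real t \<le> real (card (nbhd m d nbr T))" if "T \<in> F" for T
  proof -
    have "T \<subseteq> {0..<n}" "card T = t" using that Sn unfolding F_def by auto
    then show ?thesis using exp ta unfolding bipartite_expander_def by auto
  qed
  have step2: "(\<Sum>T\<in>F. real (card (nbhd m d nbr T))) = (\<Sum>v<m. real (card {T\<in>F. T \<inter> X v \<noteq> {}}))"
  proof -
    have "(\<Sum>T\<in>F. real (card (nbhd m d nbr T))) = (\<Sum>T\<in>F. \<Sum>v<m. if T \<inter> X v \<noteq> {} then 1 else 0)"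
      unfolding X_def nbhd_card_sum by simp
    also have "\<dots> = (\<Sum>v<m. \<Sum>T\<in>F. if T \<inter> X v \<noteq> {} then 1 else 0)" by (rule sum.swap)
    also have "\<dots> = (\<Sum>v<m. real (card {T\<in>F. T \<inter> X v \<noteq> {}}))"
      using card_filter_sum[OF finF] by simp
    finally show ?thesis .
  qed
  have step3: "real (card {T\<in>F. T \<inter> X v \<noteq> {}}) = real (s choose t) - real ((s - a v) choose t)" for v
  proof -
    have "card (S - X v) = s - a v" unfolding s_def a_def
      by (rule card_Diff_subset_Int) (use finS in simp)
    then show ?thesis unfolding F_def s_def using hit_count[OF finS, of t "X v"] ts' s_def by simp
  qed
  have cF: "card F = s choose t" unfolding F_def s_def by (rule n_subsets[OF finS])
  have Cpos: "real (s choose t) > 0" using ts' by simp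
  have "real (card F) * (\<delta> * real c * real t) \<le> (\<Sum>T\<in>F. real (card (nbhd m d nbr T)))"
    using sum_mono[of F "\<lambda>_. \<delta> * real c * real t" "\<lambda>T. real (card (nbhd m d nbr T))"] step1 by simp
  then have "real (s choose t) * (\<delta> * real c * real t) \<le> (\<Sum>v<m. real (s choose t) - real ((s - a v) choose t))"
    using step2 step3 cF by simp
  also have "\<dots> = real (s choose t) * (\<Sum>v<m. 1 - real ((s - a v) choose t) / real (s choose t))"
    unfolding sum_distrib_left using Cpos by (simp add: right_diff_distrib)
  finally have step4: "\<delta> * real c * real t \<le> (\<Sum>v<m. 1 - real ((s - a v) choose t) / real (s choose t))"
    using Cpos by simp
  define q where "q = 1 - real t / real (s - d)"
  have step5: "\<delta> * real c * real t \<le> (\<Sum>v<m. 1 - q ^ a v)"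
  proof -
    have "(\<Sum>v<m. 1 - real ((s - a v) choose t) / real (s choose t)) \<le> (\<Sum>v<m. 1 - q ^ a v)"
      by (rule sum_mono) (use hyper_lower[OF ad ts''] in \<open>simp add: q_def\<close>)
    then show ?thesis using step4 by simp
  qed
  define k where "k = real (s - d) / real t"
  have kq: "1 - 1 / k = q" unfolding k_def q_def by simp
  have k1: "1 < k" unfolding k_def using ts'' t1 by simp
  define \<delta>' where "\<delta>' = \<delta> * (real (s - d) / real s)"
  define C where "C = k / (real c * real s)"
  define \<beta> where "\<beta> = (\<lambda>i. if i = 0 then 0 else real (card {v\<in>{..<m}. a v = i}) * C)"
  have sb: "(\<lambda>i. h i * \<beta> i) sums (C * (\<Sum>v<m. if a v = 0 then 0 else h (a v)))" for h
    unfolding \<beta>_def by (rule sum_beta) (use as in auto)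
  have b1: "\<beta> sums (C * (\<Sum>v<m. if a v = 0 then 0 else 1))" using sb[of "\<lambda>_. 1"] by simp
  have b2: "(\<lambda>i. real i * \<beta> i) sums k"
  proof -
    have "(\<Sum>v<m. if a v = 0 then 0 else real (a v)) = (\<Sum>v<m. real (a v))"
      by (rule sum.cong) auto
    also have "\<dots> = real c * real s" unfolding a_def X_def s_def by (rule double_count[OF reg Sn])
    finally have "C * (\<Sum>v<m. if a v = 0 then 0 else real (a v)) = k"
      unfolding C_def using c1 s0 by simp
    then show ?thesis using sb[of real] by simp
  qed
  have b3: "(\<lambda>i. (1 - (1 - 1 / k) ^ i) * \<beta> i) sums (C * (\<Sum>v<m. 1 - q ^ a v))"
  proof -
    have "(\<Sum>v<m. if a v = 0 then 0 else 1 - q ^ a v) = (\<Sum>v<m. 1 - q ^ a v)"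
      by (rule sum.cong) auto
    then show ?thesis using sb[of "\<lambda>i. 1 - q ^ i"] kq by simp
  qed
  have c3: "\<delta>' \<le> C * (\<Sum>v<m. 1 - q ^ a v)"
  proof -
    have "C * (\<delta> * real c * real t) \<le> C * (\<Sum>v<m. 1 - q ^ a v)"
      using step5 c1 t1 k1 s0 by (intro mult_left_mono) (auto simp: C_def)
    moreover have "C * (\<delta> * real c * real t) = \<delta>'" using c1 t1 s0
      by (simp add: C_def k_def \<delta>'_def)
    ultimately show ?thesis by simp
  qed
  have bnn: "\<forall>i. 0 \<le> \<beta> i" unfolding \<beta>_def C_def using k1 by simp
  have fe: "feas \<delta>' k \<beta>" unfolding feas_def
    apply (intro conjI)
    apply (simp add: \<beta>_def)
    apply (rule bnn)
    apply (rule sums_summable[OF b1])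
    apply (rule b2)
    apply (rule sums_summable[OF b3])
    using sums_unique[OF b3] c3 by simp
  have "size_exp \<delta>' k \<le> (1/k) * suminf \<beta>" using size_exp_le[OF fe] k1 by simp
  also have "suminf \<beta> = C * real (card (nbhd m d nbr S))"
  proof -
    have "(\<Sum>v<m. if a v = 0 then 0 else (1::real)) = (\<Sum>v<m. if S \<inter> nbr v ` {0..<d} \<noteq> {} then 1 else 0)"
    proof (rule sum.cong)
      fix v
      have "a v = 0 \<longleftrightarrow> S \<inter> nbr v ` {0..<d} = {}" unfolding a_def X_def using finS by simp
      then show "(if a v = 0 then 0 else (1::real)) = (if S \<inter> nbr v ` {0..<d} \<noteq> {} then 1 else 0)" by simp
    qed simp
    then show ?thesis using sums_unique[OF b1] nbhd_card_sum[of m d nbr S] by simp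
  qed
  also have "(1/k) * (C * real (card (nbhd m d nbr S))) = real (card (nbhd m d nbr S)) / (real c * real s)"
    unfolding C_def using k1 s0 by simp
  finally show ?thesis unfolding k_def s_def S_def \<delta>'_def .
qed



lemma delta_shift:
  assumes "0 \<le> \<delta>'" "\<delta>' \<le> \<delta>" "\<delta> < 1" "1 \<le> k"
  shows "size_exp \<delta> k \<le> size_exp \<delta>' k + (\<delta> - \<delta>') / (1 - \<delta>')"
proof -
  define \<theta> where "\<theta> = (\<delta> - \<delta>') / (1 - \<delta>')"
  have th0: "0 \<le> \<theta>" "\<theta> \<le> 1" using assms by (auto simp: \<theta>_def)
  have key: "(1 - \<theta>) * \<delta>' + \<theta> = \<delta>"
  proof -
    have "(1 - \<theta>) * \<delta>' + \<theta> = \<delta>' + \<theta> * (1 - \<delta>')" by (simp add: algebra_simps)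
    also have "\<theta> * (1 - \<delta>') = \<delta> - \<delta>'" using assms by (simp add: \<theta>_def)
    finally show ?thesis by simp
  qed
  have "size_exp \<delta> k - \<theta> \<le> size_exp \<delta>' k"
  proof (rule size_exp_ge)
    show "1 \<le> k" "\<delta>' \<le> 1" using assms by auto
    fix \<beta> assume fe: "feas \<delta>' k \<beta>"
    from fe have f: "\<beta> 0 = 0" "\<forall>i. \<beta> i \<ge> 0" "summable \<beta>" "(\<lambda>i. real i * \<beta> i) sums k"
      "summable (\<lambda>i. (1 - (1 - 1 / k) ^ i) * \<beta> i)"
      "(\<Sum>i. (1 - (1 - 1 / k) ^ i) * \<beta> i) \<ge> \<delta>'" unfolding feas_def by auto
    define a where "a = 1 - \<theta>"
    have a0: "0 \<le> a" using th0 by (simp add: a_def)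
    define \<gamma> where "\<gamma> = (\<lambda>i. a * \<beta> i + (if i = 1 then \<theta> * k else 0))"
    have g1: "\<gamma> sums (a * suminf \<beta> + \<theta> * k)"
      unfolding \<gamma>_def by (rule mix_sums1) (use f(3) in \<open>simp add: summable_sums\<close>)
    have g2: "(\<lambda>i. real i * \<gamma> i) sums (a * k + real 1 * (\<theta> * k))"
      unfolding \<gamma>_def by (rule mix_sums[OF f(4)])
    have g3: "(\<lambda>i. (1 - (1 - 1 / k) ^ i) * \<gamma> i) sums
        (a * (\<Sum>i. (1 - (1 - 1 / k) ^ i) * \<beta> i) + (1 - (1 - 1 / k) ^ 1) * (\<theta> * k))"
      unfolding \<gamma>_def by (rule mix_sums[OF summable_sums[OF f(5)]])
    have e2: "a * k + real 1 * (\<theta> * k) = k" by (simp add: a_def algebra_simps)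
    have e3: "(1 - (1 - 1 / k) ^ 1) * (\<theta> * k) = \<theta>" using assms by simp
    have c3: "\<delta> \<le> a * (\<Sum>i. (1 - (1 - 1 / k) ^ i) * \<beta> i) + \<theta>"
    proof -
      have "a * \<delta>' \<le> a * (\<Sum>i. (1 - (1 - 1 / k) ^ i) * \<beta> i)"
        using f(6) a0 by (rule mult_left_mono)
      moreover have "a * \<delta>' + \<theta> = \<delta>" using key by (simp add: a_def)
      ultimately show ?thesis by linarith
    qed
    have gnn: "\<forall>i. 0 \<le> \<gamma> i" unfolding \<gamma>_def using f(2) a0 th0 assms by auto
    have gz: "\<gamma> 0 = 0" unfolding \<gamma>_def using f(1) by simp
    have g2': "(\<lambda>i. real i * \<gamma> i) sums k" using g2 e2 by simp
    have g3': "(\<lambda>i. (1 - (1 - 1 / k) ^ i) * \<gamma> i) sums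
        (a * (\<Sum>i. (1 - (1 - 1 / k) ^ i) * \<beta> i) + \<theta>)" using g3 e3 by simp
    have fg: "feas \<delta> k \<gamma>" unfolding feas_def
      apply (intro conjI)
      apply (rule gz)
      apply (rule gnn)
      apply (rule sums_summable[OF g1])
      apply (rule g2')
      apply (rule sums_summable[OF g3'])
      using sums_unique[OF g3'] c3 by simp
    have "size_exp \<delta> k \<le> (1/k) * suminf \<gamma>" using size_exp_le[OF fg] assms by simp
    also have "\<dots> = (1 - \<theta>) * ((1/k) * suminf \<beta>) + \<theta>"
    proof -
      have "suminf \<gamma> = a * suminf \<beta> + \<theta> * k" using g1 by (simp add: sums_iff)
      then show ?thesis using assms by (simp add: a_def divide_simps)
    qed
    also have "\<dots> \<le> (1/k) * suminf \<beta> + \<theta>"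
    proof -
      have "0 \<le> (1/k) * suminf \<beta>" using obj_nonneg[OF fe] assms by simp
      then have "(1 - \<theta>) * ((1/k) * suminf \<beta>) \<le> (1/k) * suminf \<beta>"
        by (rule mult_left_le_one_le) (use th0 in auto)
      then show ?thesis by simp
    qed
    finally show "size_exp \<delta> k - \<theta> \<le> (1/k) * suminf \<beta>" by simp
  qed
  then show ?thesis unfolding \<theta>_def by simp
qed

lemma sub_expand:
  assumes exp: "bipartite_expander c d \<alpha> \<delta> n m nbr"
    and Sn: "S \<subseteq> {0..<n}" and ts: "t \<le> card S" and ta: "real t \<le> \<alpha> * real n"
  shows "\<delta> * real c * real t \<le> real (card (nbhd m d nbr S))"
proof -
  have finS: "finite S" using Sn finite_subset by blast
  obtain T where T: "T \<subseteq> S" "card T = t" using obtain_subset_with_card_n[OF ts] by blast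
  have "\<delta> * real c * real t \<le> real (card (nbhd m d nbr T))"
    using exp T Sn ta unfolding bipartite_expander_def by auto
  also have "card (nbhd m d nbr T) \<le> card (nbhd m d nbr S)"
  proof (rule card_mono)
    show "finite (nbhd m d nbr S)" unfolding nbhd_def by simp
    show "nbhd m d nbr T \<subseteq> nbhd m d nbr S" using T unfolding nbhd_def by auto
  qed
  finally show ?thesis by simp
qed


lemma weight_big:
  assumes exp: "bipartite_expander c d \<alpha> \<delta> n m nbr"
    and xin: "x \<in> tanner_code n m d nbr C0" and xne: "x \<noteq> (\<lambda>_. False)"
    and z: "(\<lambda>_. False) \<in> C0" and md: "min_dist C0 = enat d0"
    and c1: "1 \<le> c" and dl: "0 < \<delta>" "\<delta> < 1" and dd0: "\<delta> * real d0 > 1" and ep: "0 < \<epsilon>"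
    and K1: "1 < K" and fK: "size_exp \<delta> K = 1 / real d0 + \<epsilon>"
    and t1: "1 \<le> t" and tfl: "real t \<le> \<alpha> * real n" and tfl2: "\<alpha> * real n < real t + 1"
    and tb1: "real d / (\<delta> * real d0 - 1) < real t"
    and tb2: "(K + real d) / ((1 - \<delta>) * \<epsilon>) < real t"
  shows "K * \<alpha> * real n < real (card {u. x u})"
proof (rule ccontr)
  assume "\<not> K * \<alpha> * real n < real (card {u. x u})"
  then have sK: "real (card {u. x u}) \<le> K * \<alpha> * real n" by simp
  define S where "S = {u. x u}"
  define s where "s = card S"
  have Sn: "S \<subseteq> {0..<n}" unfolding S_def by (rule supp_sub[OF xin])
  have finS: "finite S" using Sn finite_subset by blast
  have Sne: "S \<noteq> {}" using xne unfolding S_def by auto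
  have s1: "1 \<le> s" using Sne finS unfolding s_def by (simp add: Suc_le_eq card_gt_0_iff)
  have cpos: "real c > 0" using c1 by simp
  have d0pos: "real d0 > 0" using dd0 by (cases "d0 = 0") auto
  have nb: "real (card (nbhd m d nbr S)) * real d0 \<le> real c * real s"
    unfolding S_def s_def by (rule nbhd_le[OF exp xin z md])
  consider "s \<le> t" | "t < s \<and> s \<le> d + t" | "d + t < s" by linarith
  then show False
  proof cases
    case 1
    have "\<delta> * real c * real s \<le> real (card (nbhd m d nbr S))"
      by (rule sub_expand[OF exp Sn]) (use 1 tfl in \<open>auto simp: s_def\<close>)
    then have "\<delta> * real c * real s * real d0 \<le> real c * real s"
      using nb d0pos by (smt (verit) mult_right_mono)
    then have "(\<delta> * real d0) * (real c * real s) \<le> 1 * (real c * real s)" by (simp add: algebra_simps)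
    then have "\<delta> * real d0 \<le> 1" using cpos s1 by (subst (asm) mult_le_cancel_right) simp
    then show False using dd0 by simp
  next
    case 2
    have "\<delta> * real c * real t \<le> real (card (nbhd m d nbr S))"
      by (rule sub_expand[OF exp Sn]) (use 2 tfl in \<open>auto simp: s_def\<close>)
    then have "\<delta> * real c * real t * real d0 \<le> real c * real s"
      using nb d0pos by (smt (verit) mult_right_mono)
    also have "\<dots> \<le> real c * (real d + real t)" using 2 cpos by simp
    finally have "(\<delta> * real d0 * real t) * real c \<le> (real d + real t) * real c" by (simp add: algebra_simps)
    then have "\<delta> * real d0 * real t \<le> real d + real t" using cpos by simp
    then have "(\<delta> * real d0 - 1) * real t \<le> real d" by (simp add: algebra_simps)
    then have "real t \<le> real d / (\<delta> * real d0 - 1)" using dd0 by (simp add: field_simps)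
    then show False using tb1 by simp
  next
    case 3
    define k where "k = real (s - d) / real t"
    define \<delta>' where "\<delta>' = \<delta> * (real (s - d) / real s)"
    have spos: "real s > 0" using s1 by simp
    have tpos: "real t > 0" using t1 by simp
    have k1: "1 < k" unfolding k_def using 3 t1 by simp
    have sd: "real (s - d) = real s - real d" using 3 by simp
    have fle: "size_exp \<delta>' k \<le> real (card (nbhd m d nbr S)) / (real c * real s)"
      unfolding k_def \<delta>'_def s_def S_def
      by (rule comb_main[OF exp xin c1 _ t1 _ tfl]) (use dl 3 in \<open>auto simp: s_def S_def\<close>)
    have "real (card (nbhd m d nbr S)) / (real c * real s) \<le> 1 / real d0"
    proof -
      have "real (card (nbhd m d nbr S)) \<le> real c * real s / real d0"
        using nb d0pos by (simp add: field_simps)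
      then show ?thesis using cpos spos d0pos by (simp add: field_simps)
    qed
    with fle have f1: "size_exp \<delta>' k \<le> 1 / real d0" by simp
    have r0: "0 \<le> real (s - d) / real s" using spos by simp
    have r1: "real (s - d) / real s \<le> 1" using spos by (simp add: divide_le_eq_1)
    have d'0a: "0 \<le> \<delta>'" unfolding \<delta>'_def using dl r0 by simp
    have d'0b: "\<delta>' \<le> \<delta>" unfolding \<delta>'_def
      by (rule mult_right_le_one_le) (use dl r0 r1 in auto)
    note d'0 = d'0a d'0b
    have "size_exp \<delta> k \<le> size_exp \<delta>' k + (\<delta> - \<delta>') / (1 - \<delta>')"
      by (rule delta_shift[OF d'0 dl(2)]) (use k1 in simp)
    also have "(\<delta> - \<delta>') / (1 - \<delta>') \<le> real d / ((1 - \<delta>) * real t)"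
    proof -
      have "\<delta> - \<delta>' = \<delta> * real d / real s" unfolding \<delta>'_def sd using spos
        by (simp add: field_simps)
      also have "\<dots> \<le> real d / real s" using dl spos by (simp add: divide_right_mono mult_left_le_one_le)
      also have "\<dots> \<le> real d / real t" using tpos 3 by (intro divide_left_mono) auto
      finally have num: "\<delta> - \<delta>' \<le> real d / real t" .
      have den: "1 - \<delta> \<le> 1 - \<delta>'" using d'0 by simp
      have "(\<delta> - \<delta>') / (1 - \<delta>') \<le> (\<delta> - \<delta>') / (1 - \<delta>)"
        using den dl d'0 by (intro divide_left_mono) auto
      also have "\<dots> \<le> (real d / real t) / (1 - \<delta>)"
        using num dl by (intro divide_right_mono) auto
      finally show ?thesis by (simp add: mult.commute)
    qed
    finally have up: "size_exp \<delta> k \<le> 1 / real d0 + real d / ((1 - \<delta>) * real t)" using f1 by simp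
    have kK: "k - K \<le> K / real t"
    proof -
      have "k \<le> real s / real t" unfolding k_def sd using tpos by (simp add: divide_right_mono)
      also have "\<dots> \<le> K * \<alpha> * real n / real t" using sK tpos by (simp add: divide_right_mono s_def S_def)
      also have "\<dots> \<le> K * (real t + 1) / real t"
        using tfl2 K1 tpos by (intro divide_right_mono) (auto simp: mult.assoc)
      also have "\<dots> = K + K / real t" using tpos by (simp add: field_simps)
      finally show ?thesis by simp
    qed
    have low: "1 / real d0 + \<epsilon> - K / ((1 - \<delta>) * real t) \<le> size_exp \<delta> k"
    proof (cases "k \<le> K")
      case True
      have "size_exp \<delta> K \<le> size_exp \<delta> k" by (rule size_exp_mono) (use True k1 dl in auto)
      moreover have "0 \<le> K / ((1 - \<delta>) * real t)" using K1 dl tpos by simp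
      ultimately show ?thesis using fK by simp
    next
      case False
      have "\<bar>size_exp \<delta> k - size_exp \<delta> K\<bar> \<le> \<bar>k - K\<bar> / (1 - \<delta>)"
        by (rule lip_abs) (use k1 K1 dl in auto)
      moreover have "\<bar>k - K\<bar> / (1 - \<delta>) \<le> (K / real t) / (1 - \<delta>)"
        using False kK dl by (intro divide_right_mono) auto
      ultimately show ?thesis using fK by (simp add: mult.commute abs_le_iff)
    qed
    from low up have "\<epsilon> \<le> (K + real d) / ((1 - \<delta>) * real t)"
      by (simp add: add_divide_distrib)
    then have "\<epsilon> * ((1 - \<delta>) * real t) \<le> K + real d" using dl tpos by (simp add: field_simps)
    then have "real t \<le> (K + real d) / ((1 - \<delta>) * \<epsilon>)" using dl ep by (simp add: field_simps)
    then show False using tb2 by simp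
  qed
qed



lemma tanner_xor:
  assumes "binary_linear_code d C0" "x \<in> tanner_code n m d nbr C0" "y \<in> tanner_code n m d nbr C0"
  shows "(\<lambda>i. x i \<noteq> y i) \<in> tanner_code n m d nbr C0"
proof -
  have xor: "\<forall>a\<in>C0. \<forall>b\<in>C0. (\<lambda>i. a i \<noteq> b i) \<in> C0" using assms(1) unfolding binary_linear_code_def by simp
  have bv: "(\<lambda>i. x i \<noteq> y i) \<in> bvecs n" using assms(2,3) unfolding tanner_code_def bvecs_def by auto
  have loc: "(\<lambda>i. if i < d then (x (nbr v i) \<noteq> y (nbr v i)) else False) \<in> C0" if "v < m" for v
  proof -
    have a: "(\<lambda>i. if i < d then x (nbr v i) else False) \<in> C0" using assms(2) that unfolding tanner_code_def by auto
    have b: "(\<lambda>i. if i < d then y (nbr v i) else False) \<in> C0" using assms(3) that unfolding tanner_code_def by auto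
    have "(\<lambda>i. (if i < d then x (nbr v i) else False) \<noteq> (if i < d then y (nbr v i) else False))
        = (\<lambda>i. if i < d then (x (nbr v i) \<noteq> y (nbr v i)) else False)" by auto
    moreover have "(\<lambda>i. (if i < d then x (nbr v i) else False) \<noteq> (if i < d then y (nbr v i) else False)) \<in> C0"
      using bspec[OF bspec[OF xor a] b] by simp
    ultimately show ?thesis by simp
  qed
  show ?thesis unfolding tanner_code_def mem_Collect_eq using bv loc by blast
qed

lemma no_expander_delta1:
  assumes exp: "bipartite_expander c d \<alpha> 1 n m nbr" and c1: "1 \<le> c" and d2: "2 \<le> d"
    and an: "2 \<le> \<alpha> * real n" and a1: "\<alpha> \<le> 1" and a0: "0 < \<alpha>"
  shows False
proof -
  have reg: "cd_regular c d n m nbr" using exp unfolding bipartite_expander_def by simp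
  have "\<alpha> * real n \<le> real n" using a1 a0 by (intro mult_left_le_one_le) auto
  then have n2: "2 \<le> real n" using an by linarith
  then have n0: "0 < n" by simp
  define A where "A = (\<lambda>u. {w. w < m \<and> u \<in> nbr w ` {0..<d}})"
  have cA: "card (A u) = c" if "u < n" for u using reg that unfolding cd_regular_def A_def by simp
  have finA: "finite (A u)" for u unfolding A_def by simp
  have "A 0 \<noteq> {}" using cA[OF n0] c1 by auto
  then obtain v where "v \<in> A 0" by blast
  then have vm: "v < m" unfolding A_def by simp
  have inj: "inj_on (nbr v) {0..<d}" and img: "nbr v ` {0..<d} \<subseteq> {0..<n}"
    using reg vm unfolding cd_regular_def by auto
  define u1 where "u1 = nbr v 0"
  define u2 where "u2 = nbr v 1"
  have u12: "u1 \<noteq> u2" unfolding u1_def u2_def using inj_on_eq_iff[OF inj, of 0 1] d2 by auto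
  have un: "u1 < n" "u2 < n" unfolding u1_def u2_def using img d2 by (auto simp: image_subset_iff)
  have vA: "v \<in> A u1" "v \<in> A u2" unfolding A_def u1_def u2_def using vm d2 by auto
  define T where "T = {u1, u2}"
  have cT: "card T = 2" unfolding T_def using u12 by simp
  have ex: "\<forall>S. S \<subseteq> {0..<n} \<and> real (card S) \<le> \<alpha> * real n \<longrightarrow>
        real (card (nbhd m d nbr S)) \<ge> 1 * real c * real (card S)"
    using exp unfolding bipartite_expander_def by blast
  have "T \<subseteq> {0..<n}" using un unfolding T_def by auto
  moreover have "real (card T) \<le> \<alpha> * real n" using cT an by simp
  ultimately have "1 * real c * real (card T) \<le> real (card (nbhd m d nbr T))"
    using ex by blast
  moreover have "nbhd m d nbr T = A u1 \<union> A u2" unfolding nbhd_def A_def T_def by auto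
  moreover have "card (A u1 \<union> A u2) + card (A u1 \<inter> A u2) = card (A u1) + card (A u2)"
    using card_Un_Int[OF finA finA, of u1 u2] by simp
  moreover have "card (A u1 \<inter> A u2) \<ge> 1"
  proof -
    have "A u1 \<inter> A u2 \<noteq> {}" using vA by auto
    then show ?thesis using finA by (simp add: Suc_le_eq card_gt_0_iff)
  qed
  ultimately show False using cA un cT by simp
qed

theorem theorem5p6:
  fixes c d d0 :: nat and \<alpha> \<delta> \<epsilon> :: real and C0 :: "(nat \<Rightarrow> bool) set"
  assumes "c \<ge> 1" and "d \<ge> 1"
    and "0 < \<alpha>" and "\<alpha> \<le> 1" and "0 < \<delta>" and "\<delta> \<le> 1"
    and "binary_linear_code d C0" and "min_dist C0 = enat d0"
    and "\<delta> * real d0 > 1"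
    and "0 < \<epsilon>" and "\<epsilon> < \<delta> - 1 / real d0"
  shows "\<exists>N. \<forall>n \<ge> N. \<forall>m nbr. bipartite_expander c d \<alpha> \<delta> n m nbr \<longrightarrow>
           ereal_of_enat (min_dist (tanner_code n m d nbr C0))
             > ereal (size_exp_inv \<delta> (1 / real d0 + \<epsilon>) * \<alpha> * real n)"
proof -
  note c1 = assms(1) and apos = assms(3) and a1 = assms(4) and dpos = assms(5) and d1 = assms(6)
    and blc = assms(7) and md = assms(8) and dd0 = assms(9) and ep = assms(10) and epd = assms(11)
  have z: "(\<lambda>_. False) \<in> C0" and Cb: "C0 \<subseteq> bvecs d" using blc unfolding binary_linear_code_def by auto
  have d0pos: "real d0 > 0" using dd0 by (cases "d0 = 0") auto
  show ?thesis
  proof (cases "\<delta> = 1")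
    case True
    have "{(x, y). x \<in> C0 \<and> y \<in> C0 \<and> x \<noteq> y} \<noteq> {}"
    proof
      assume e: "{(x, y). x \<in> C0 \<and> y \<in> C0 \<and> x \<noteq> y} = {}"
      have "min_dist C0 = \<infinity>" unfolding min_dist_def e by (simp add: top_enat_def)
      then show False using md by simp
    qed
    then obtain x y where xy: "x \<in> C0" "y \<in> C0" "x \<noteq> y" by auto
    have "min_dist C0 \<le> enat (hamming_dist (fst (x, y)) (snd (x, y)))"
      unfolding min_dist_def
      using INF_lower[of "(x, y)" "{(x, y). x \<in> C0 \<and> y \<in> C0 \<and> x \<noteq> y}"
        "\<lambda>p. enat (hamming_dist (fst p) (snd p))"] xy by auto
    then have d0h: "d0 \<le> hamming_dist x y" using md by simp
    have "{i. x i \<noteq> y i} \<subseteq> {0..<d}" using xy Cb unfolding bvecs_def by (force simp: not_le[symmetric] subset_iff)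
    then have "hamming_dist x y \<le> d" unfolding hamming_dist_def
      using card_mono[of "{0..<d}" "{i. x i \<noteq> y i}"] by simp
    moreover have "d0 \<ge> 2" using dd0 True by simp
    ultimately have d2: "2 \<le> d" using d0h by simp
    define N where "N = nat \<lceil>2 / \<alpha>\<rceil>"
    have "\<forall>n \<ge> N. \<forall>m nbr. \<not> bipartite_expander c d \<alpha> \<delta> n m nbr"
    proof (intro allI impI)
      fix n m nbr assume nN: "n \<ge> N"
      have "2 / \<alpha> \<le> real n" using nN real_nat_ceiling_ge[of "2 / \<alpha>"] unfolding N_def by linarith
      then have an: "2 \<le> \<alpha> * real n" using apos by (simp add: field_simps)
      show "\<not> bipartite_expander c d \<alpha> \<delta> n m nbr"
        using no_expander_delta1[OF _ c1 d2 an a1 apos] True by blast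
    qed
    then show ?thesis by blast
  next
    case False
    then have dl: "\<delta> < 1" using d1 by simp
    define y where "y = 1 / real d0 + \<epsilon>"
    have y0a: "0 < y" unfolding y_def using d0pos ep by (intro add_pos_pos) auto
    have y0b: "y < \<delta>" unfolding y_def using epd by linarith
    note y0 = y0a y0b
    define K where "K = size_exp_inv \<delta> y"
    have K: "1 < K" "size_exp \<delta> K = y" using inv_props[OF dpos dl y0] unfolding K_def by auto
    define B where "B = max (real d / (\<delta> * real d0 - 1)) ((K + real d) / ((1 - \<delta>) * \<epsilon>)) + 2"
    define N where "N = nat \<lceil>(B + 1) / \<alpha>\<rceil>"
    have main: "ereal (K * \<alpha> * real n) < ereal_of_enat (min_dist (tanner_code n m d nbr C0))"
      if nN: "n \<ge> N" and exp: "bipartite_expander c d \<alpha> \<delta> n m nbr" for n m nbr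
    proof -
      have "(B + 1) / \<alpha> \<le> real n" using nN real_nat_ceiling_ge[of "(B + 1) / \<alpha>"] unfolding N_def by linarith
      then have an: "B + 1 \<le> \<alpha> * real n" using apos by (simp add: field_simps)
      define t where "t = nat \<lfloor>\<alpha> * real n\<rfloor>"
      have "0 \<le> (K + real d) / ((1 - \<delta>) * \<epsilon>)" using K(1) dl ep by simp
      then have B2: "2 \<le> B" unfolding B_def by linarith
      have fl0: "0 \<le> \<lfloor>\<alpha> * real n\<rfloor>" using an B2 by simp
      have rt: "real t = real_of_int \<lfloor>\<alpha> * real n\<rfloor>" unfolding t_def using fl0 by simp
      have tfl: "real t \<le> \<alpha> * real n" using rt of_int_floor_le[of "\<alpha> * real n"] by linarith
      have tfl2: "\<alpha> * real n < real t + 1" using rt real_of_int_floor_add_one_gt[of "\<alpha> * real n"] by linarith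
      have tB: "B < real t" using an tfl2 by simp
      have t1: "1 \<le> t" using tB B2 by simp
      have tb1: "real d / (\<delta> * real d0 - 1) < real t" using tB unfolding B_def by simp
      have tb2: "(K + real d) / ((1 - \<delta>) * \<epsilon>) < real t" using tB unfolding B_def by simp
      define M where "M = nat (\<lfloor>K * \<alpha> * real n\<rfloor> + 1)"
      have Kn0: "0 \<le> K * \<alpha> * real n" using K(1) apos by simp
      have fl1: "0 \<le> \<lfloor>K * \<alpha> * real n\<rfloor> + 1" using Kn0 by simp
      have rM: "real M = real_of_int \<lfloor>K * \<alpha> * real n\<rfloor> + 1" unfolding M_def using fl1 by simp
      have KM: "K * \<alpha> * real n < real M" using rM real_of_int_floor_add_one_gt[of "K * \<alpha> * real n"] by linarith
      have "enat M \<le> min_dist (tanner_code n m d nbr C0)"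
        unfolding min_dist_def
      proof (rule INF_greatest)
        fix p assume "p \<in> {(x, y). x \<in> tanner_code n m d nbr C0 \<and> y \<in> tanner_code n m d nbr C0 \<and> x \<noteq> y}"
        then obtain x1 x2 where p: "p = (x1, x2)" "x1 \<in> tanner_code n m d nbr C0"
          "x2 \<in> tanner_code n m d nbr C0" "x1 \<noteq> x2" by auto
        define w where "w = (\<lambda>i. x1 i \<noteq> x2 i)"
        have wT: "w \<in> tanner_code n m d nbr C0" unfolding w_def by (rule tanner_xor[OF blc p(2,3)])
        have wne: "w \<noteq> (\<lambda>_. False)"
        proof
          assume "w = (\<lambda>_. False)"
          then have "\<forall>i. \<not> (x1 i \<noteq> x2 i)" unfolding w_def by (simp add: fun_eq_iff)
          then have "x1 = x2" by (simp add: fun_eq_iff)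
          then show False using p(4) by simp
        qed
        have "K * \<alpha> * real n < real (card {u. w u})"
          by (rule weight_big[OF exp wT wne z md c1 dpos dl dd0 ep K(1) _ t1 tfl tfl2 tb1 tb2])
            (use K(2) in \<open>simp add: y_def\<close>)
        then have "\<lfloor>K * \<alpha> * real n\<rfloor> < int (card {u. w u})"
          using floor_less_iff[of "K * \<alpha> * real n" "int (card {u. w u})"] by simp
        then have "M \<le> card {u. w u}" unfolding M_def by simp
        then show "enat M \<le> enat (hamming_dist (fst p) (snd p))"
          using p(1) unfolding hamming_dist_def w_def by simp
      qed
      then have "ereal_of_enat (enat M) \<le> ereal_of_enat (min_dist (tanner_code n m d nbr C0))"
        by (simp only: ereal_of_enat_le_iff)
      then have le: "ereal (real M) \<le> ereal_of_enat (min_dist (tanner_code n m d nbr C0))" by simp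
      have "ereal (K * \<alpha> * real n) < ereal (real M)" using KM by simp
      then show ?thesis using le by (rule less_le_trans)
    qed
    show ?thesis
      apply (rule exI[of _ N])
      using main unfolding K_def y_def by auto
  qed
qed

end
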